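(* Let $T,S\in\mathcal M_n(\mathbb C)$ and let $e,f,g,h$ be non-negative continuous functions on $[0,\infty)$ such that $f(t)g(t)=t$ and $e(t)h(t)=t$ for all $t\ge0$. Then $$s_j(T+S)\le\big\|g^2(|T^*|)+h^2(|S^*|)\big\|^{1/2}\,s_j^{1/2}\big(f^2(|T|)+e^2(|S|)\big)\quad\text{for every }j=1,\dots,n.$$ Furthermore, for every $p>0$, $$\|T+S\|_p\le\big\|g^2(|T^*|)+h^2(|S^*|)\big\|^{1/2}\,\big\|f^2(|T|)+e^2(|S|)\big\|_{p/2}^{1/2}.$$
   Context: $\mathcal M_n(\mathbb C)$ is the set of $n\times n$ complex matrices; $|T|=(T^*T)^{1/2}$; functions of positive matrices are defined by functional calculus. $s_1(T)\ge\dots\ge s_n(T)$ are the singular values of $T$ (eigenvalues of $|T|$). $\|T\|=s_1(T)$ is the operator norm, and for $p>0$, $\|T\|_p=\big(\sum_{j=1}^n s_j^p(T)\big)^{1/p}$ is the Schatten $p$-norm (a quasi-norm for $p<1$). *)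

theory Defs
  imports "Jordan_Normal_Form.Schur_Decomposition"
begin

text \<open>Matrices in M_n(C) are represented as Jordan_Normal_Form matrices of type
  complex mat with carrier carrier_mat n n.  T* is mat_adjoint T.\<close>

definition unitary_mat :: "nat \<Rightarrow> complex mat \<Rightarrow> bool" where
  "unitary_mat n U \<longleftrightarrow> U \<in> carrier_mat n n \<and> U * mat_adjoint U = 1\<^sub>m n \<and> mat_adjoint U * U = 1\<^sub>m n"

definition diag_of_list :: "complex list \<Rightarrow> complex mat" where
  "diag_of_list d = mat (length d) (length d) (\<lambda>(i,j). if i = j then d ! i else 0)"

text \<open>Functional calculus for a Hermitian matrix A = U diag(d) U*, with d real:
  f(A) = U diag(f(d)) U*.  (This is independent of the chosen unitary diagonalisation.)\<close>
definition mat_fun :: "(real \<Rightarrow> real) \<Rightarrow> complex mat \<Rightarrow> complex mat" where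
  "mat_fun f A = (SOME B. \<exists>U d. unitary_mat (dim_row A) U \<and> length d = dim_row A \<and>
      A = U * diag_of_list (map complex_of_real d) * mat_adjoint U \<and>
      B = U * diag_of_list (map (\<lambda>x. complex_of_real (f x)) d) * mat_adjoint U)"

definition mat_abs :: "complex mat \<Rightarrow> complex mat" where
  "mat_abs T = mat_fun sqrt (mat_adjoint T * T)"

definition eigenvalue_list :: "complex mat \<Rightarrow> complex list" where
  "eigenvalue_list A = (SOME as. char_poly A = (\<Prod>a\<leftarrow>as. [:- a, 1:]))"

text \<open>Singular values s_1(T) \<ge> ... \<ge> s_n(T): the eigenvalues of |T| (which are real),
  in non-increasing order.  sing_val T j is s_j(T) for 1 \<le> j \<le> n.\<close>
definition sing_vals :: "complex mat \<Rightarrow> real list" where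
  "sing_vals T = rev (sort (map Re (eigenvalue_list (mat_abs T))))"

definition sing_val :: "complex mat \<Rightarrow> nat \<Rightarrow> real" where
  "sing_val T j = sing_vals T ! (j - 1)"

definition op_norm :: "complex mat \<Rightarrow> real" where
  "op_norm T = sing_val T 1"

definition schatten_norm :: "real \<Rightarrow> complex mat \<Rightarrow> real" where
  "schatten_norm p T = (\<Sum>j=1..dim_row T. sing_val T j powr p) powr (1 / p)"

end

theory Submission
  imports Defs
begin


abbreviation adj :: "complex mat \<Rightarrow> complex mat" ("_\<^sup>H" [1000] 999) where
  "adj A \<equiv> mat_adjoint A"

lemma adj_eq: "mat_adjoint (A::complex mat) = mat (dim_col A) (dim_row A) (\<lambda>(i,j). cnj (A $$ (j,i)))"
  by (rule eq_matI, auto simp: mat_adjoint_def mat_of_rows_def)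

lemma adj_dim[simp]: "dim_row (mat_adjoint (A::complex mat)) = dim_col A"
  "dim_col (mat_adjoint (A::complex mat)) = dim_row A"
  by (auto simp: adj_eq)

lemma adj_index[simp]: "i < dim_col A \<Longrightarrow> j < dim_row A \<Longrightarrow> mat_adjoint (A::complex mat) $$ (i,j) = cnj (A $$ (j,i))"
  by (auto simp: adj_eq)

lemma adj_carrier[simp]: "(A::complex mat) \<in> carrier_mat n m \<Longrightarrow> mat_adjoint A \<in> carrier_mat m n"
  by (auto simp: adj_eq)

lemma adj_adj[simp]: "mat_adjoint (mat_adjoint (A::complex mat)) = A"
  by (rule eq_matI, auto simp: adj_eq)

lemma adj_mult: assumes "(A::complex mat) \<in> carrier_mat n m" "B \<in> carrier_mat m k"
  shows "mat_adjoint (A * B) = mat_adjoint B * mat_adjoint A"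
proof (rule eq_matI)
  fix i j assume ij: "i < dim_row (B\<^sup>H * A\<^sup>H)" "j < dim_col (B\<^sup>H * A\<^sup>H)"
  then show "(A * B)\<^sup>H $$ (i, j) = (B\<^sup>H * A\<^sup>H) $$ (i, j)" using assms
    by (auto simp: scalar_prod_def intro!: sum.cong)
qed (use assms in auto)

lemma adj_add: assumes "(A::complex mat) \<in> carrier_mat n m" "B \<in> carrier_mat n m"
  shows "mat_adjoint (A + B) = mat_adjoint A + mat_adjoint B"
  by (rule eq_matI, use assms in auto)

lemma adj_one[simp]: "mat_adjoint (1\<^sub>m n :: complex mat) = 1\<^sub>m n"
  by (rule eq_matI, auto)

lemma adj_smult: "mat_adjoint (c \<cdot>\<^sub>m (A::complex mat)) = cnj c \<cdot>\<^sub>m mat_adjoint A"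
  by (rule eq_matI, auto)


definition Dg :: "real list \<Rightarrow> complex mat" where
  "Dg d = diag_of_list (map complex_of_real d)"

lemma Dg_carrier[simp]: "Dg d \<in> carrier_mat (length d) (length d)"
  and Dg_dim[simp]: "dim_row (Dg d) = length d" "dim_col (Dg d) = length d"
  by (auto simp: Dg_def diag_of_list_def)

lemma Dg_index[simp]: "i < length d \<Longrightarrow> j < length d \<Longrightarrow> Dg d $$ (i,j) = (if i = j then complex_of_real (d!i) else 0)"
  by (auto simp: Dg_def diag_of_list_def)

lemma Dg_adj[simp]: "mat_adjoint (Dg d) = Dg d"
  by (rule eq_matI, auto)

lemma mult_Dg_index: assumes "X \<in> carrier_mat m (length d)" "k < m" "i < length d"
  shows "(X * Dg d) $$ (k,i) = X $$ (k,i) * d ! i"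
proof -
  have "(X * Dg d) $$ (k,i) = (\<Sum>l<length d. X $$ (k,l) * Dg d $$ (l,i))"
    using assms by (auto simp: scalar_prod_def atLeast0LessThan)
  also have "\<dots> = (\<Sum>l<length d. if l = i then X $$ (k,i) * d ! i else 0)"
    using assms by (intro sum.cong, auto)
  finally show ?thesis using assms by simp
qed

lemma Dg_mult_index: assumes "X \<in> carrier_mat (length d) m" "k < length d" "i < m"
  shows "(Dg d * X) $$ (k,i) = d ! k * X $$ (k,i)"
proof -
  have "(Dg d * X) $$ (k,i) = (\<Sum>l<length d. Dg d $$ (k,l) * X $$ (l,i))"
    using assms by (auto simp: scalar_prod_def atLeast0LessThan)
  also have "\<dots> = (\<Sum>l<length d. if l = k then d ! k * X $$ (k,i) else 0)"
    using assms by (intro sum.cong, auto)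
  finally show ?thesis using assms by simp
qed

lemma unitary_carrier: "unitary_mat n U \<Longrightarrow> U \<in> carrier_mat n n"
  by (simp add: unitary_mat_def)

lemma unitary_adj: "unitary_mat n U \<Longrightarrow> unitary_mat n (mat_adjoint U)"
  by (auto simp: unitary_mat_def)

context fixes n :: nat begin

lemma assoc_n: "(A::complex mat) \<in> carrier_mat n n \<Longrightarrow> B \<in> carrier_mat n n \<Longrightarrow> C \<in> carrier_mat n n \<Longrightarrow> A * B * C = A * (B * C)"
  by (rule assoc_mult_mat[of _ n n _ n _ n])

lemma mult_n: "(A::complex mat) \<in> carrier_mat n n \<Longrightarrow> B \<in> carrier_mat n n \<Longrightarrow> A * B \<in> carrier_mat n n"
  by auto

lemma adj_n[simp]: "A \<in> carrier_mat n n \<Longrightarrow> A\<^sup>H \<in> carrier_mat n n"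
  by auto

declare mult_n[simp]

lemma one_n1[simp]: "(A::complex mat) \<in> carrier_mat n n \<Longrightarrow> A * 1\<^sub>m n = A"
  by (rule right_mult_one_mat)
lemma one_n2[simp]: "(A::complex mat) \<in> carrier_mat n n \<Longrightarrow> 1\<^sub>m n * A = A"
  by (rule left_mult_one_mat)

lemma unitary_mult: assumes "unitary_mat n U" "unitary_mat n V"
  shows "unitary_mat n (U * V)"
proof -
  have U: "U \<in> carrier_mat n n" and V: "V \<in> carrier_mat n n" using assms unitary_carrier by auto
  have "U * V * (U * V)\<^sup>H = U * (V * V\<^sup>H) * U\<^sup>H"
    using U V by (simp add: adj_mult assoc_n)
  also have "\<dots> = 1\<^sub>m n" using assms U by (simp add: unitary_mat_def)
  finally have 1: "U * V * (U * V)\<^sup>H = 1\<^sub>m n" .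
  have "(U * V)\<^sup>H * (U * V) = V\<^sup>H * (U\<^sup>H * U) * V"
    using U V by (simp add: adj_mult assoc_n)
  also have "\<dots> = 1\<^sub>m n" using assms V by (simp add: unitary_mat_def)
  finally show ?thesis using 1 U V unfolding unitary_mat_def by auto
qed

lemma unitary_cancel1: "unitary_mat n U \<Longrightarrow> X \<in> carrier_mat n n \<Longrightarrow> U\<^sup>H * (U * X) = X"
  unfolding unitary_mat_def by (auto simp: assoc_mult_mat[of _ n n _ n _ n, symmetric])

lemma unitary_cancel2: "unitary_mat n U \<Longrightarrow> X \<in> carrier_mat n n \<Longrightarrow> U * (U\<^sup>H * X) = X"
  unfolding unitary_mat_def by (auto simp: assoc_mult_mat[of _ n n _ n _ n, symmetric])

lemma unitary_cancel3: "unitary_mat n U \<Longrightarrow> U\<^sup>H * U = 1\<^sub>m n"  "unitary_mat n U \<Longrightarrow> U * U\<^sup>H = 1\<^sub>m n"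
  unfolding unitary_mat_def by auto

lemma mat_fun_unique_aux:
  assumes U: "unitary_mat n U" and V: "unitary_mat n V" and d: "length d = n" and c: "length c = n"
    and eq: "U * Dg d * U\<^sup>H = V * Dg c * V\<^sup>H"
  shows "U * Dg (map \<phi> d) * U\<^sup>H = V * Dg (map \<phi> c) * V\<^sup>H"
proof -
  have Uc[simp]: "U \<in> carrier_mat n n" and Vc[simp]: "V \<in> carrier_mat n n" using U V unitary_carrier by auto
  have Dd[simp]: "Dg d \<in> carrier_mat n n" "Dg c \<in> carrier_mat n n"
     "Dg (map \<phi> d) \<in> carrier_mat n n" "Dg (map \<phi> c) \<in> carrier_mat n n"
    using d c Dg_carrier by (metis length_map)+
  define X where "X = V\<^sup>H * U"
  have Xc[simp]: "X \<in> carrier_mat n n" unfolding X_def by simp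
  have "X * Dg d = V\<^sup>H * (U * Dg d * U\<^sup>H) * U"
    unfolding X_def using U by (simp add: assoc_n mult_n unitary_cancel1 unitary_cancel3)
  also have "\<dots> = Dg c * X"
    unfolding eq X_def using V by (simp add: assoc_n mult_n unitary_cancel1)
  finally have XD: "X * Dg d = Dg c * X" .
  have XD2: "X * Dg (map \<phi> d) = Dg (map \<phi> c) * X"
  proof (rule eq_matI)
    fix k i assume ki: "k < dim_row (Dg (map \<phi> c) * X)" "i < dim_col (Dg (map \<phi> c) * X)"
    hence k: "k < n" and i: "i < n" using c Xc by auto
    from arg_cong[OF XD, of "\<lambda>M. M $$ (k,i)"]
    have e: "X $$ (k,i) * d ! i = c ! k * X $$ (k,i)"
      using k i d c mult_Dg_index[of X n d k i] Dg_mult_index[of X c n k i] by simp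
    have "X $$ (k,i) * \<phi> (d ! i) = \<phi> (c ! k) * X $$ (k,i)"
    proof (cases "X $$ (k,i) = 0")
      case False
      with e have "d ! i = c ! k" by (metis mult.commute mult_cancel_left of_real_eq_iff)
      then show ?thesis by simp
    qed simp
    then show "(X * Dg (map \<phi> d)) $$ (k, i) = (Dg (map \<phi> c) * X) $$ (k, i)"
      using k i d c mult_Dg_index[of X n "map \<phi> d" k i] Dg_mult_index[of X "map \<phi> c" n k i] by simp
  qed (use d c Xc[unfolded carrier_mat_def] in auto)
  have "U * Dg (map \<phi> d) * U\<^sup>H = V * (X * Dg (map \<phi> d)) * U\<^sup>H"
    unfolding X_def using V by (simp add: assoc_n mult_n unitary_cancel2)
  also have "\<dots> = V * (Dg (map \<phi> c) * X) * U\<^sup>H" by (simp only: XD2)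
  also have "\<dots> = V * Dg (map \<phi> c) * V\<^sup>H"
    unfolding X_def using U by (simp add: assoc_n mult_n unitary_cancel2 unitary_cancel3)
  finally show ?thesis .
qed

lemma mat_fun_eq:
  assumes U: "unitary_mat n U" and d: "length d = n" and A: "A = U * Dg d * U\<^sup>H"
  shows "mat_fun \<phi> A = U * Dg (map \<phi> d) * U\<^sup>H"
proof -
  have dimA: "dim_row A = n" using A U d unitary_carrier by auto
  let ?P = "\<lambda>B. \<exists>U d. unitary_mat (dim_row A) U \<and> length d = dim_row A \<and>
      A = U * diag_of_list (map complex_of_real d) * mat_adjoint U \<and>
      B = U * diag_of_list (map (\<lambda>x. complex_of_real (\<phi> x)) d) * mat_adjoint U"
  have "?P (U * Dg (map \<phi> d) * U\<^sup>H)"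
    using U d A dimA unfolding Dg_def by (auto intro!: exI[of _ U] exI[of _ d] simp: o_def)
  hence "?P (mat_fun \<phi> A)" unfolding mat_fun_def by (rule someI)
  then obtain V c where V: "unitary_mat n V" and c: "length c = n" and AV: "A = V * Dg c * V\<^sup>H"
    and B: "mat_fun \<phi> A = V * Dg (map \<phi> c) * V\<^sup>H"
    unfolding dimA Dg_def by (auto simp: o_def)
  show ?thesis unfolding B
    by (rule mat_fun_unique_aux[OF V U c d], use A AV in simp)
qed

end


lemma adj_mult_index: assumes "(A::complex mat) \<in> carrier_mat n m" "B \<in> carrier_mat n k" "i < m" "j < k"
  shows "(A\<^sup>H * B) $$ (i,j) = col B j \<bullet>c col A i"
  using assms by (auto simp: scalar_prod_def intro!: sum.cong)

lemma cprod_smult: assumes "(x::complex vec) \<in> carrier_vec n" "y \<in> carrier_vec n"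
  shows "(a \<cdot>\<^sub>v x) \<bullet>c (b \<cdot>\<^sub>v y) = a * cnj b * (x \<bullet>c y)"
  using assms by (auto simp: scalar_prod_def sum_distrib_left intro!: sum.cong)

lemma cnj_sq: "z * cnj z = complex_of_real ((cmod z)\<^sup>2)"
  by (rule complex_norm_square[symmetric])

lemma cprod_self: "(v::complex vec) \<bullet>c v = of_real (\<Sum>i<dim_vec v. (cmod (v$i))\<^sup>2)"
  unfolding scalar_prod_def of_real_sum by (auto simp: atLeast0LessThan cnj_sq simp del: of_real_power intro!: sum.cong)

lemma cprod_self_nonneg: "0 \<le> (\<Sum>i<dim_vec v. (cmod ((v::complex vec)$i))\<^sup>2)"
  by (auto intro: sum_nonneg)

lemmas nn = assoc_n mult_n adj_n one_n1 one_n2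

lemma unit_extend:
  fixes v :: "complex vec"
  assumes v: "v \<in> carrier_vec n" and v0: "v \<noteq> 0\<^sub>v n"
  shows "\<exists>W c. unitary_mat n W \<and> col W 0 = c \<cdot>\<^sub>v v \<and> 0 < n"
proof -
  interpret cof_vec_space n "TYPE(complex)" .
  define b where "b = basis_completion v"
  from basis_completion[OF v v0, folded b_def]
  have dist_b: "distinct b" and indep: "\<not> lin_dep (set b)" and b: "set b \<subseteq> carrier_vec n"
    and hdb: "hd b = v" and len_b: "length b = n" by auto
  have n: "0 < n" using v v0 by (metis carrier_vecD gr0I vec_of_dim_0 zero_carrier_vec)
  from hdb len_b n obtain vs where bv: "b = v # vs" by (cases b, auto)
  define ws where "ws = gram_schmidt n b"
  from gram_schmidt_result[OF b dist_b indep refl, folded ws_def]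
  have ws: "set ws \<subseteq> carrier_vec n" "corthogonal ws" "length ws = n" by (auto simp: len_b)
  from gram_schmidt_hd[OF v, of vs, folded bv] have hdws: "hd ws = v" unfolding ws_def .
  have ws0: "ws ! 0 = v" using hdws ws(3) n by (cases ws, auto)
  have wsc: "i < n \<Longrightarrow> ws ! i \<in> carrier_vec n" for i using ws by auto
  define s where "s i = (\<Sum>k<n. (cmod ((ws!i)$k))\<^sup>2)" for i
  have wss: "i < n \<Longrightarrow> ws!i \<bullet>c ws!i = of_real (s i)" for i
  proof -
    assume i: "i < n"
    have "dim_vec (ws!i) = n" using wsc[OF i] by auto
    then show ?thesis by (simp add: s_def cprod_self del: of_real_sum of_real_power)
  qed
  have spos: "i < n \<Longrightarrow> 0 < s i" for i
  proof -
    assume i: "i < n"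
    have "ws!i \<bullet>c ws!i \<noteq> 0" using ws(2) i ws(3) unfolding corthogonal_def by auto
    then have "s i \<noteq> 0" using wss[OF i] by auto
    moreover have "0 \<le> s i" unfolding s_def by (auto intro: sum_nonneg)
    ultimately show ?thesis by auto
  qed
  define r where "r i = 1 / sqrt (s i)" for i
  define us where "us = map (\<lambda>i. complex_of_real (r i) \<cdot>\<^sub>v ws!i) [0..<n]"
  have us: "length us = n" "i < n \<Longrightarrow> us ! i = complex_of_real (r i) \<cdot>\<^sub>v ws!i" for i
    unfolding us_def by auto
  have usc: "i < n \<Longrightarrow> us ! i \<in> carrier_vec n" for i using us wsc by auto
  define W where "W = mat_of_cols n us"
  have W: "W \<in> carrier_mat n n" unfolding W_def using mat_of_cols_carrier(1)[of n us] us by simp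
  have colW: "i < n \<Longrightarrow> col W i = us ! i" for i unfolding W_def using us usc by simp
  have WW: "W\<^sup>H * W = 1\<^sub>m n"
  proof (rule eq_matI)
    fix i j assume "i < dim_row (1\<^sub>m n)" "j < dim_col (1\<^sub>m n)"
    hence i: "i < n" and j: "j < n" by auto
    have "(W\<^sup>H * W) $$ (i,j) = us!j \<bullet>c us!i"
      using adj_mult_index[OF W W i j] colW i j by simp
    also have "\<dots> = complex_of_real (r j) * complex_of_real (r i) * (ws!j \<bullet>c ws!i)"
      using us(2)[OF i] us(2)[OF j] cprod_smult[OF wsc[OF j] wsc[OF i]] by simp
    also have "\<dots> = 1\<^sub>m n $$ (i,j)"
    proof (cases "i = j")
      case True
      have "r i * r i * s i = 1" unfolding r_def using spos[OF i]
        by (simp add: field_simps)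
      then have "complex_of_real (r i) * complex_of_real (r i) * complex_of_real (s i) = 1"
        by (metis of_real_1 of_real_mult)
      then show ?thesis using True wss[OF i] i by simp
    next
      case False
      then have "ws!j \<bullet>c ws!i = 0" using ws(2,3) i j unfolding corthogonal_def by auto
      then show ?thesis using False i j by simp
    qed
    finally show "(W\<^sup>H * W) $$ (i,j) = 1\<^sub>m n $$ (i,j)" .
  qed (use W in auto)
  have WW2: "W * W\<^sup>H = 1\<^sub>m n" using mat_mult_left_right_inverse[OF adj_carrier[OF W] W WW] .
  have "col W 0 = complex_of_real (r 0) \<cdot>\<^sub>v v" using colW[OF n] us(2)[OF n] ws0 by simp
  moreover have "unitary_mat n W" unfolding unitary_mat_def using W WW WW2 by auto
  ultimately show ?thesis using n by blast
qed

definition bd :: "complex \<Rightarrow> complex mat \<Rightarrow> complex mat" where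
  "bd c X = mat (Suc (dim_row X)) (Suc (dim_col X)) (\<lambda>(i,j). if i = 0 \<and> j = 0 then c else if i = 0 \<or> j = 0 then 0 else X $$ (i - 1, j - 1))"

lemma bd_carrier[simp]: "X \<in> carrier_mat m k \<Longrightarrow> bd c X \<in> carrier_mat (Suc m) (Suc k)"
  by (auto simp: bd_def)

lemma bd_mult: assumes X: "X \<in> carrier_mat m k" and Y: "Y \<in> carrier_mat k l"
  shows "bd a X * bd b Y = bd (a * b) (X * Y)"
proof (rule eq_matI)
  fix i j assume ij: "i < dim_row (bd (a * b) (X * Y))" "j < dim_col (bd (a * b) (X * Y))"
  then have i: "i < Suc m" and j: "j < Suc l" using X Y by (auto simp: bd_def)
  have "(bd a X * bd b Y) $$ (i,j) = (\<Sum>t<Suc k. bd a X $$ (i,t) * bd b Y $$ (t,j))"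
    using X Y i j by (auto simp: bd_def scalar_prod_def atLeast0LessThan)
  also have "\<dots> = bd a X $$ (i,0) * bd b Y $$ (0,j) + (\<Sum>t<k. bd a X $$ (i,Suc t) * bd b Y $$ (Suc t,j))"
    by (rule sum.lessThan_Suc_shift)
  also have "\<dots> = bd (a * b) (X * Y) $$ (i,j)"
    using X Y i j by (cases i; cases j) (auto simp: bd_def scalar_prod_def atLeast0LessThan)
  finally show "(bd a X * bd b Y) $$ (i, j) = bd (a * b) (X * Y) $$ (i, j)" .
qed (use X Y in \<open>auto simp: bd_def\<close>)

lemma bd_adj: "mat_adjoint (bd c X) = bd (cnj c) (mat_adjoint X)"
  by (rule eq_matI, auto simp: bd_def)

lemma bd_one: "bd 1 (1\<^sub>m m) = 1\<^sub>m (Suc m)"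
  by (rule eq_matI, auto simp: bd_def)

lemma bd_Dg: "bd (complex_of_real x) (Dg d) = Dg (x # d)"
  by (rule eq_matI, auto simp: bd_def nth_Cons')

lemma bd_unitary: "unitary_mat m U \<Longrightarrow> unitary_mat (Suc m) (bd 1 U)"
  unfolding unitary_mat_def
  by (auto simp: bd_adj bd_mult[of U m m "U\<^sup>H" m] bd_mult[of "U\<^sup>H" m m U m] bd_one)

lemma spectral:
  assumes "(A::complex mat) \<in> carrier_mat n n" "mat_adjoint A = A"
  shows "\<exists>U d. unitary_mat n U \<and> length d = n \<and> A = U * Dg d * mat_adjoint U"
  using assms
proof (induction n arbitrary: A)
  case 0
  then have "A = 1\<^sub>m 0 * Dg [] * mat_adjoint (1\<^sub>m 0)" by (intro eq_matI, auto)
  moreover have "unitary_mat 0 (1\<^sub>m 0)" by (auto simp: unitary_mat_def)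
  ultimately show ?case by (intro exI[of _ "1\<^sub>m 0"] exI[of _ "[]"], auto)
next
  case (Suc m A)
  let ?n = "Suc m"
  have A: "A \<in> carrier_mat ?n ?n" and hA: "A\<^sup>H = A" using Suc by auto
  obtain as where cp: "char_poly A = (\<Prod>a\<leftarrow>as. [:- a, 1:])" and las: "length as = ?n"
    using char_poly_factorized[OF A] by auto
  then obtain e es where ase: "as = e # es" by (cases as, auto)
  have "poly (char_poly A) e = 0" unfolding cp ase by simp
  then have "eigenvalue A e" using eigenvalue_root_char_poly[OF A] by simp
  from find_eigenvector[OF A this] obtain v where "eigenvector A v e" by auto
  then have v: "v \<in> carrier_vec ?n" and v0: "v \<noteq> 0\<^sub>v ?n" and Av: "A *\<^sub>v v = e \<cdot>\<^sub>v v"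
    using A unfolding eigenvector_def by auto
  from unit_extend[OF v v0] obtain W c where W: "unitary_mat ?n W" and colW: "col W 0 = c \<cdot>\<^sub>v v" by auto
  have Wc: "W \<in> carrier_mat ?n ?n" using W unitary_carrier by auto
  define A' where "A' = W\<^sup>H * A * W"
  have A'c: "A' \<in> carrier_mat ?n ?n" unfolding A'_def using Wc A by auto
  have hA': "A'\<^sup>H = A'" unfolding A'_def using Wc A hA
    by (simp add: adj_mult[of _ ?n ?n _ ?n] nn[where n="?n"])
  have colAW: "col (A * W) 0 = e \<cdot>\<^sub>v col W 0"
  proof -
    have "col (A * W) 0 = A *\<^sub>v col W 0" using A Wc by (intro col_mult2) auto
    also have "\<dots> = c \<cdot>\<^sub>v (A *\<^sub>v v)" unfolding colW by (rule mult_mat_vec[OF A v])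
    also have "\<dots> = (c * e) \<cdot>\<^sub>v v" unfolding Av by (rule smult_smult_assoc)
    also have "\<dots> = e \<cdot>\<^sub>v (c \<cdot>\<^sub>v v)" by (simp add: smult_smult_assoc mult.commute)
    finally show ?thesis unfolding colW .
  qed
  have A'0: "i < ?n \<Longrightarrow> A' $$ (i,0) = (if i = 0 then e else 0)" for i
  proof -
    assume i: "i < ?n"
    have "A' $$ (i,0) = row (W\<^sup>H) i \<bullet> col (A * W) 0" unfolding A'_def using i A Wc
      by (simp add: nn[where n="?n"])
    also have "\<dots> = e * (row (W\<^sup>H) i \<bullet> col W 0)" unfolding colAW using Wc by simp
    also have "\<dots> = e * (W\<^sup>H * W) $$ (i,0)" using i Wc by simp
    also have "\<dots> = (if i = 0 then e else 0)" using W i by (simp add: unitary_cancel3)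
    finally show ?thesis .
  qed
  have A'0': "j < ?n \<Longrightarrow> A' $$ (0,j) = (if j = 0 then cnj e else 0)" for j
  proof -
    assume j: "j < ?n"
    have "A' $$ (0,j) = A'\<^sup>H $$ (0,j)" using hA' by simp
    also have "\<dots> = cnj (A' $$ (j,0))" using A'c j by simp
    finally show ?thesis using A'0[OF j] by auto
  qed
  have er: "e = complex_of_real (Re e)"
  proof -
    have "cnj e = e" using A'0[of 0] A'0'[of 0] by simp
    then show ?thesis by (auto simp: complex_eq_iff)
  qed
  define A3 where "A3 = mat m m (\<lambda>(i,j). A' $$ (Suc i, Suc j))"
  have A3c: "A3 \<in> carrier_mat m m" unfolding A3_def by auto
  have hA3: "A3\<^sup>H = A3"
  proof (rule eq_matI)
    fix i j assume "i < dim_row A3" "j < dim_col A3"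
    then show "A3\<^sup>H $$ (i, j) = A3 $$ (i, j)" using A3c A'c
      by (auto simp: A3_def) (metis adj_index hA' Suc_less_eq carrier_matD)
  qed (use A3c in auto)
  from Suc.IH[OF A3c hA3] obtain U3 d3 where U3: "unitary_mat m U3" and d3: "length d3 = m"
    and A3e: "A3 = U3 * Dg d3 * U3\<^sup>H" by auto
  have U3c: "U3 \<in> carrier_mat m m" using U3 unitary_carrier by auto
  have A'bd: "A' = bd e A3"
  proof (rule eq_matI)
    fix i j assume "i < dim_row (bd e A3)" "j < dim_col (bd e A3)"
    then have i: "i < ?n" and j: "j < ?n" using A3c by (auto simp: bd_def)
    show "A' $$ (i,j) = bd e A3 $$ (i,j)"
      using A'0[OF i] A'0'[OF j] i j A3c er by (cases i; cases j) (auto simp: bd_def A3_def)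
  qed (use A3c A'c in \<open>auto simp: bd_def\<close>)
  define U where "U = W * bd 1 U3"
  have bdU: "unitary_mat ?n (bd 1 U3)" using bd_unitary[OF U3] .
  have U: "unitary_mat ?n U" unfolding U_def using unitary_mult[OF W bdU] .
  have bdc: "bd 1 U3 \<in> carrier_mat ?n ?n" using U3c by simp
  have "A' = bd 1 U3 * bd (complex_of_real (Re e)) (Dg d3) * bd 1 (U3\<^sup>H)"
  proof -
    have Dc: "Dg d3 \<in> carrier_mat m m" using d3 Dg_carrier by metis
    have "bd 1 U3 * bd (complex_of_real (Re e)) (Dg d3) * bd 1 (U3\<^sup>H) = bd e (U3 * Dg d3) * bd 1 (U3\<^sup>H)"
      using bd_mult[OF U3c Dc] er by simp
    also have "\<dots> = bd e A3" unfolding A3e using bd_mult[of "U3 * Dg d3" m m "U3\<^sup>H" m] U3c Dc by simp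
    finally show ?thesis unfolding A'bd by simp
  qed
  also have "\<dots> = bd 1 U3 * Dg (Re e # d3) * (bd 1 U3)\<^sup>H"
    by (simp add: bd_Dg bd_adj)
  finally have A'e: "A' = bd 1 U3 * Dg (Re e # d3) * (bd 1 U3)\<^sup>H" .
  have Dn: "Dg (Re e # d3) \<in> carrier_mat ?n ?n" using d3 by (metis Dg_carrier length_Cons)
  have "A = W * A' * W\<^sup>H" unfolding A'_def using W A
    by (simp add: nn[where n="?n"] unitary_cancel2 unitary_cancel3 Wc)
  also have "\<dots> = U * Dg (Re e # d3) * U\<^sup>H" unfolding A'e U_def using Wc bdc d3
    by (simp add: nn[where n="?n"] adj_mult[of _ ?n ?n _ ?n] Dn)
  finally show ?case using U d3 by (intro exI[of _ U] exI[of _ "Re e # d3"], auto)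
qed


lemma linprod_mset:
  "(\<Prod>a\<leftarrow>as. [:- a, 1:]) = (\<Prod>a\<leftarrow>bs. [:- a, 1:]) \<Longrightarrow> mset as = mset (bs :: complex list)"
proof (induction as arbitrary: bs)
  case Nil
  show ?case
  proof (cases bs)
    case (Cons b bs')
    have "degree (\<Prod>a\<leftarrow>bs. [:- a, 1:]) = length bs"
      by (subst degree_prod_list_eq) (auto simp: o_def sum_list_triv)
    then show ?thesis using Nil Cons by simp
  qed simp
next
  case (Cons a as)
  have "poly (\<Prod>x\<leftarrow>a # as. [:- x, 1:]) a = 0" by (simp add: poly_prod_list)
  then have "poly (\<Prod>x\<leftarrow>bs. [:- x, 1:]) a = 0" by (simp only: Cons(2))
  then have "a \<in> set bs" by (auto simp: poly_prod_list prod_list_zero_iff)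
  then have mb: "mset bs = mset (a # remove1 a bs)" by simp
  have bsx: "(\<Prod>a\<leftarrow>bs. [:- a, 1:]) = (\<Prod>a\<leftarrow>(a # remove1 a bs). [:- a, 1:])"
  proof -
    have "(\<Prod>a\<leftarrow>bs. [:- a, 1:]) = prod_mset (image_mset (\<lambda>a. [:- a, 1:]) (mset bs))"
      by (simp only: prod_mset_prod_list[symmetric] mset_map)
    also have "\<dots> = prod_mset (image_mset (\<lambda>a. [:- a, 1:]) (mset (a # remove1 a bs)))"
      by (simp only: mb)
    also have "\<dots> = (\<Prod>a\<leftarrow>(a # remove1 a bs). [:- a, 1:])"
      by (simp only: prod_mset_prod_list mset_map[symmetric])
    finally show ?thesis .
  qed
  have eq: "[:- a, 1:] * (\<Prod>a\<leftarrow>as. [:- a, 1:]) = [:- a, 1:] * (\<Prod>a\<leftarrow>remove1 a bs. [:- a, 1:])"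
    using trans[OF Cons(2) bsx] by (simp only: list.map prod_list.Cons)
  have nz: "[:- a, 1:] \<noteq> (0::complex poly)" by simp
  have "(\<Prod>a\<leftarrow>as. [:- a, 1:]) = (\<Prod>a\<leftarrow>remove1 a bs. [:- a, 1:])"
    using mult_left_cancel[OF nz] eq by blast
  from Cons(1)[OF this] have "mset as = mset (remove1 a bs)" .
  then show ?case using mb by (simp only: mset.simps)
qed

lemma Dg_upper: "upper_triangular (Dg d)"
  by (auto simp: upper_triangular_def)

lemma diag_mat_Dg: "diag_mat (Dg d) = map complex_of_real d"
  by (auto simp: diag_mat_def intro!: nth_equalityI)

lemma eig_mset:
  assumes U: "unitary_mat n U" and d: "length d = n" and A: "A = U * Dg d * U\<^sup>H"
  shows "mset (eigenvalue_list A) = mset (map complex_of_real d)"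
proof -
  have Uc: "U \<in> carrier_mat n n" using U unitary_carrier by auto
  have Dc: "Dg d \<in> carrier_mat n n" using d Dg_carrier by metis
  have Ac: "A \<in> carrier_mat n n" using A Uc Dc by auto
  have "similar_mat_wit A (Dg d) U (U\<^sup>H)" unfolding similar_mat_wit_def Let_def
    using Ac Uc Dc A U by (auto simp: unitary_mat_def)
  then have "similar_mat A (Dg d)" unfolding similar_mat_def by blast
  then have cp: "char_poly A = (\<Prod>a\<leftarrow>map complex_of_real d. [:- a, 1:])"
    using char_poly_similar[OF \<open>similar_mat A (Dg d)\<close>] char_poly_upper_triangular[OF Dc Dg_upper] diag_mat_Dg by simp
  then have "\<exists>as. char_poly A = (\<Prod>a\<leftarrow>as. [:- a, 1:])" by blast
  then have "char_poly A = (\<Prod>a\<leftarrow>eigenvalue_list A. [:- a, 1:])"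
    unfolding eigenvalue_list_def by (rule someI_ex)
  with cp show ?thesis using linprod_mset[of "eigenvalue_list A" "map complex_of_real d"] by simp
qed

lemma sort_mset_eq: "mset xs = mset ys \<Longrightarrow> sort xs = sort ys"
  using properties_for_sort[of "sort ys" xs] by simp

lemma psd_diag:
  assumes V: "unitary_mat n V" and d: "length d = n" and M: "(M::complex mat) \<in> carrier_mat n n"
    and eq: "M\<^sup>H * M = V * Dg d * V\<^sup>H" and i: "i < n"
  shows "0 \<le> d ! i"
proof -
  have Vc: "V \<in> carrier_mat n n" using V unitary_carrier by auto
  have Dc: "Dg d \<in> carrier_mat n n" using d Dg_carrier by metis
  have "(M * V)\<^sup>H * (M * V) = V\<^sup>H * (M\<^sup>H * M) * V"
    using M Vc by (simp add: adj_mult nn[where n=n])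
  also have "\<dots> = Dg d" unfolding eq using V Vc Dc by (simp add: nn[where n=n] unitary_cancel1 unitary_cancel3)
  finally have e: "(M * V)\<^sup>H * (M * V) = Dg d" .
  have MV: "M * V \<in> carrier_mat n n" using M Vc by auto
  have "complex_of_real (d ! i) = Dg d $$ (i,i)" using i d by simp
  also have "\<dots> = col (M * V) i \<bullet>c col (M * V) i" unfolding e[symmetric]
    using adj_mult_index[OF MV MV i i] .
  also have "\<dots> = of_real (\<Sum>k<dim_vec (col (M * V) i). (cmod (col (M * V) i $ k))\<^sup>2)" by (rule cprod_self)
  finally have "d ! i = (\<Sum>k<dim_vec (col (M * V) i). (cmod (col (M * V) i $ k))\<^sup>2)"
    by (simp only: of_real_eq_iff)
  then show ?thesis by (simp add: sum_nonneg)
qed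

lemma Dg_sq: "Dg d * Dg d = Dg (map (\<lambda>x. x\<^sup>2) d)"
proof (rule eq_matI)
  fix i j assume "i < dim_row (Dg (map (\<lambda>x. x\<^sup>2) d))" "j < dim_col (Dg (map (\<lambda>x. x\<^sup>2) d))"
  then show "(Dg d * Dg d) $$ (i,j) = Dg (map (\<lambda>x. x\<^sup>2) d) $$ (i,j)"
    using mult_Dg_index[OF Dg_carrier, of i d j] by (simp add: power2_eq_square)
qed auto

lemma sing_vals_eq:
  assumes M: "(M::complex mat) \<in> carrier_mat n n"
  shows "\<exists>V d. unitary_mat n V \<and> length d = n \<and> M\<^sup>H * M = V * Dg d * V\<^sup>H \<and> (\<forall>x\<in>set d. 0 \<le> x)
     \<and> mat_abs M = V * Dg (map sqrt d) * V\<^sup>H \<and> sing_vals M = rev (sort (map sqrt d))"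
proof -
  have h: "(M\<^sup>H * M)\<^sup>H = M\<^sup>H * M" using M by (simp add: adj_mult[of "M\<^sup>H" n n M n])
  have "M\<^sup>H * M \<in> carrier_mat n n" using M by auto
  from spectral[OF this h] obtain V d where V: "unitary_mat n V" and d: "length d = n"
    and e: "M\<^sup>H * M = V * Dg d * V\<^sup>H" by auto
  have nn0: "\<forall>x\<in>set d. 0 \<le> x" using psd_diag[OF V d M e] d by (auto simp: in_set_conv_nth)
  have ab: "mat_abs M = V * Dg (map sqrt d) * V\<^sup>H" unfolding mat_abs_def using mat_fun_eq[OF V d e] .
  have me: "mset (eigenvalue_list (mat_abs M)) = mset (map complex_of_real (map sqrt d))"
    by (rule eig_mset[OF V _ ab], simp add: d)
  have ms: "mset (map Re (eigenvalue_list (mat_abs M))) = mset (map sqrt d)"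
  proof -
    have "mset (map Re (eigenvalue_list (mat_abs M))) = image_mset Re (mset (eigenvalue_list (mat_abs M)))"
      by simp
    also have "\<dots> = image_mset Re (mset (map complex_of_real (map sqrt d)))" by (simp only: me)
    also have "\<dots> = mset (map Re (map complex_of_real (map sqrt d)))" by (simp only: mset_map)
    also have "map Re (map complex_of_real (map sqrt d)) = map sqrt d" by (induct d) auto
    finally show ?thesis .
  qed
  have "sing_vals M = rev (sort (map sqrt d))" unfolding sing_vals_def using sort_mset_eq[OF ms] by (simp only:)
  then show ?thesis using V d e nn0 ab by blast
qed


definition nsq :: "complex vec \<Rightarrow> real" where
  "nsq x = (\<Sum>i<dim_vec x. (cmod (x$i))\<^sup>2)"

lemma nsq_nonneg: "0 \<le> nsq x"
  unfolding nsq_def by (auto intro: sum_nonneg)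

lemma cprod_self_nsq: "x \<bullet>c x = complex_of_real (nsq x)"
  unfolding nsq_def by (rule cprod_self)

lemma cprod_adj: assumes A: "(A::complex mat) \<in> carrier_mat n m" and x: "x \<in> carrier_vec m" and y: "y \<in> carrier_vec n"
  shows "(A *\<^sub>v x) \<bullet>c y = x \<bullet>c (A\<^sup>H *\<^sub>v y)"
proof -
  have "(A *\<^sub>v x) \<bullet>c y = (\<Sum>i<n. (\<Sum>k<m. A $$ (i,k) * x $ k) * cnj (y $ i))"
    using A x y by (auto simp: scalar_prod_def atLeast0LessThan intro!: sum.cong)
  also have "\<dots> = (\<Sum>i<n. \<Sum>k<m. A $$ (i,k) * x $ k * cnj (y $ i))"
    by (simp add: sum_distrib_right)
  also have "\<dots> = (\<Sum>k<m. \<Sum>i<n. A $$ (i,k) * x $ k * cnj (y $ i))"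
    by (rule sum.swap)
  also have "\<dots> = (\<Sum>k<m. x $ k * cnj (\<Sum>i<n. cnj (A $$ (i,k)) * y $ i))"
    by (simp add: sum_distrib_left mult.commute mult.left_commute)
  also have "\<dots> = x \<bullet>c (A\<^sup>H *\<^sub>v y)"
    using A x y by (auto simp: scalar_prod_def atLeast0LessThan intro!: sum.cong)
  finally show ?thesis .
qed

lemma Dg_mult_vec: assumes "u \<in> carrier_vec (length c)" "i < length c"
  shows "(Dg c *\<^sub>v u) $ i = c ! i * u $ i"
proof -
  have "(Dg c *\<^sub>v u) $ i = (\<Sum>k<length c. Dg c $$ (i,k) * u $ k)"
    using assms by (auto simp: scalar_prod_def atLeast0LessThan)
  also have "\<dots> = (\<Sum>k<length c. if k = i then c ! i * u $ i else 0)"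
    using assms by (intro sum.cong, auto)
  finally show ?thesis using assms by simp
qed

lemma Dg_qf: assumes u: "u \<in> carrier_vec (length c)"
  shows "(Dg c *\<^sub>v u) \<bullet>c u = complex_of_real (\<Sum>i<length c. c ! i * (cmod (u $ i))\<^sup>2)"
proof -
  have dims: "dim_vec (conjugate u) = length c" using u by simp
  have "(Dg c *\<^sub>v u) \<bullet>c u = (\<Sum>i\<in>{0..<length c}. (Dg c *\<^sub>v u) $ i * conjugate u $ i)"
    unfolding scalar_prod_def dims ..
  also have "\<dots> = (\<Sum>i<length c. c ! i * (u $ i * cnj (u $ i)))" unfolding atLeast0LessThan
    using u by (intro sum.cong) (auto simp: Dg_mult_vec simp del: index_mult_mat_vec)
  also have "\<dots> = complex_of_real (\<Sum>i<length c. c ! i * (cmod (u $ i))\<^sup>2)"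
    unfolding cnj_sq of_real_sum by (simp add: power2_eq_square del: of_real_power)
  finally show ?thesis .
qed

lemma qf_spec: assumes U: "unitary_mat n U" and c: "length c = n" and x: "x \<in> carrier_vec n"
  shows "((U * Dg c * U\<^sup>H) *\<^sub>v x) \<bullet>c x = complex_of_real (\<Sum>i<n. c ! i * (cmod ((U\<^sup>H *\<^sub>v x) $ i))\<^sup>2)"
proof -
  have Uc: "U \<in> carrier_mat n n" using U unitary_carrier by auto
  have Dc: "Dg c \<in> carrier_mat n n" using c Dg_carrier by metis
  have a: "U\<^sup>H *\<^sub>v x \<in> carrier_vec n" using mult_mat_vec_carrier[OF adj_carrier[OF Uc] x] .
  have "(U * Dg c * U\<^sup>H) *\<^sub>v x = (U * Dg c) *\<^sub>v (U\<^sup>H *\<^sub>v x)"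
    using Uc Dc x by (simp add: assoc_mult_mat_vec[of _ n n _ n])
  also have "\<dots> = U *\<^sub>v (Dg c *\<^sub>v (U\<^sup>H *\<^sub>v x))"
    using Uc Dc a by (simp add: assoc_mult_mat_vec[of _ n n _ n])
  finally have "(U * Dg c * U\<^sup>H) *\<^sub>v x = U *\<^sub>v (Dg c *\<^sub>v (U\<^sup>H *\<^sub>v x))" .
  then have "((U * Dg c * U\<^sup>H) *\<^sub>v x) \<bullet>c x = (Dg c *\<^sub>v (U\<^sup>H *\<^sub>v x)) \<bullet>c (U\<^sup>H *\<^sub>v x)"
    using cprod_adj[OF Uc _ x, of "Dg c *\<^sub>v (U\<^sup>H *\<^sub>v x)"] Dc a by auto
  also have "\<dots> = complex_of_real (\<Sum>i<n. c ! i * (cmod ((U\<^sup>H *\<^sub>v x) $ i))\<^sup>2)"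
    using Dg_qf[of "U\<^sup>H *\<^sub>v x" c] a c by simp
  finally show ?thesis .
qed

lemma nsq_unitary: assumes U: "unitary_mat n U" and x: "x \<in> carrier_vec n"
  shows "nsq (U\<^sup>H *\<^sub>v x) = nsq x"
proof -
  have Uc: "U \<in> carrier_mat n n" using U unitary_carrier by auto
  have "(U\<^sup>H *\<^sub>v x) \<bullet>c (U\<^sup>H *\<^sub>v x) = x \<bullet>c (U *\<^sub>v (U\<^sup>H *\<^sub>v x))"
    using cprod_adj[of "U\<^sup>H" n n x "U\<^sup>H *\<^sub>v x"] Uc x mult_mat_vec_carrier[OF adj_carrier[OF Uc] x] by auto
  also have "U *\<^sub>v (U\<^sup>H *\<^sub>v x) = x"
    using Uc x U by (simp add: assoc_mult_mat_vec[of _ n n _ n, symmetric] unitary_cancel3)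
  finally show ?thesis unfolding cprod_self_nsq by simp
qed

lemma real_cs: fixes a b :: "'i \<Rightarrow> real"
  shows "(\<Sum>i\<in>A. a i * b i)\<^sup>2 \<le> (\<Sum>i\<in>A. (a i)\<^sup>2) * (\<Sum>i\<in>A. (b i)\<^sup>2)"
proof -
  have "0 \<le> (\<Sum>i\<in>A. \<Sum>j\<in>A. (a i * b j - a j * b i)\<^sup>2)" by (intro sum_nonneg, auto)
  also have "\<dots> = (\<Sum>i\<in>A. \<Sum>j\<in>A. ((a i)\<^sup>2 * (b j)\<^sup>2 + (a j)\<^sup>2 * (b i)\<^sup>2 - 2 * ((a i * b i) * (a j * b j))))"
    by (intro sum.cong refl) (simp add: power2_eq_square algebra_simps)
  also have "\<dots> = (\<Sum>i\<in>A. \<Sum>j\<in>A. (a i)\<^sup>2 * (b j)\<^sup>2) + (\<Sum>i\<in>A. \<Sum>j\<in>A. (a j)\<^sup>2 * (b i)\<^sup>2)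
      - 2 * (\<Sum>i\<in>A. \<Sum>j\<in>A. (a i * b i) * (a j * b j))"
    by (simp only: sum.distrib sum_subtractf sum_distrib_left)
  also have "(\<Sum>i\<in>A. \<Sum>j\<in>A. (a i)\<^sup>2 * (b j)\<^sup>2) = (\<Sum>i\<in>A. (a i)\<^sup>2) * (\<Sum>i\<in>A. (b i)\<^sup>2)"
    by (rule sum_product[symmetric])
  also have "(\<Sum>i\<in>A. \<Sum>j\<in>A. (a j)\<^sup>2 * (b i)\<^sup>2) = (\<Sum>i\<in>A. (a i)\<^sup>2) * (\<Sum>i\<in>A. (b i)\<^sup>2)"
    by (subst sum.swap) (rule sum_product[symmetric])
  also have "(\<Sum>i\<in>A. \<Sum>j\<in>A. (a i * b i) * (a j * b j)) = (\<Sum>i\<in>A. a i * b i)\<^sup>2"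
    unfolding power2_eq_square by (rule sum_product[symmetric])
  finally show ?thesis by simp
qed

lemma cs: assumes x: "x \<in> carrier_vec n" and y: "y \<in> carrier_vec n"
  shows "(cmod (x \<bullet>c y))\<^sup>2 \<le> nsq x * nsq y"
proof -
  have "cmod (x \<bullet>c y) = cmod (\<Sum>i<n. x $ i * cnj (y $ i))"
    using x y by (simp add: scalar_prod_def atLeast0LessThan)
  also have "\<dots> \<le> (\<Sum>i<n. cmod (x $ i * cnj (y $ i)))" by (rule norm_sum)
  also have "\<dots> = (\<Sum>i<n. cmod (x $ i) * cmod (y $ i))" by (simp add: norm_mult)
  finally have le: "cmod (x \<bullet>c y) \<le> (\<Sum>i<n. cmod (x $ i) * cmod (y $ i))" .
  then have "(cmod (x \<bullet>c y))\<^sup>2 \<le> (\<Sum>i<n. cmod (x $ i) * cmod (y $ i))\<^sup>2"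
    by (simp add: power_mono)
  also have "\<dots> \<le> nsq x * nsq y" unfolding nsq_def using x y real_cs by simp
  finally show ?thesis .
qed


lemma Dg_carrier_n: "length c = n \<Longrightarrow> Dg c \<in> carrier_mat n n"
  using Dg_carrier by metis

lemma cprod_swap: assumes "x \<in> carrier_vec n" "y \<in> carrier_vec n"
  shows "x \<bullet>c y = cnj (y \<bullet>c x)"
  using assms by (auto simp: scalar_prod_def cnj_sum mult.commute intro!: sum.cong)

lemma Dg3_index: assumes "length a = n" "length b = n" "length c = n" "i < n" "j < n"
  shows "(Dg a * Dg b * Dg c) $$ (i,j) = (if i = j then complex_of_real (a!i * b!i * c!i) else 0)"
proof -
  have ab: "Dg a * Dg b \<in> carrier_mat n n" using assms Dg_carrier_n by (metis mult_carrier_mat)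
  have "(Dg a * Dg b * Dg c) $$ (i,j) = (Dg a * Dg b) $$ (i,j) * c ! j"
    using mult_Dg_index[of "Dg a * Dg b" n c i j] ab assms by simp
  also have "(Dg a * Dg b) $$ (i,j) = a ! i * Dg b $$ (i,j)"
    using Dg_mult_index[of "Dg b" a n i j] assms Dg_carrier_n by simp
  finally show ?thesis using assms by auto
qed

lemma rde: "(if 0 < t then 1 / sqrt t else 0) * t * (if 0 < t then 1 / sqrt t else 0) = (if 0 < t then 1 else (0::real))"
proof (cases "0 < t")
  case True
  then have "sqrt t * sqrt t = t" by simp
  then show ?thesis using True by (simp add: field_simps)
qed simp

lemma mixed:
  fixes T :: "complex mat" and f g :: "real \<Rightarrow> real"
  assumes T: "T \<in> carrier_mat n n"
    and fg: "\<And>t. t \<ge> 0 \<Longrightarrow> f t * g t = t"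
    and V: "unitary_mat n V" and d: "length d = n" and eV: "T\<^sup>H * T = V * Dg d * V\<^sup>H" and d0: "\<forall>t\<in>set d. 0 \<le> t"
    and W: "unitary_mat n W" and d': "length d' = n" and eW: "T * T\<^sup>H = W * Dg d' * W\<^sup>H"
    and x: "x \<in> carrier_vec n" and y: "y \<in> carrier_vec n"
  shows "(cmod ((T *\<^sub>v x) \<bullet>c y))\<^sup>2 \<le>
     (\<Sum>i<n. (f (sqrt (d!i)))\<^sup>2 * (cmod ((V\<^sup>H *\<^sub>v x)$i))\<^sup>2) *
     (\<Sum>k<n. (g (sqrt (d'!k)))\<^sup>2 * (cmod ((W\<^sup>H *\<^sub>v y)$k))\<^sup>2)"
proof -
  have Vc: "V \<in> carrier_mat n n" and Wc: "W \<in> carrier_mat n n" using V W unitary_carrier by auto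
  have Dd: "Dg d \<in> carrier_mat n n" and Dd': "Dg d' \<in> carrier_mat n n" using d d' Dg_carrier_n by auto
  define M where "M = W\<^sup>H * T * V"
  have Mc: "M \<in> carrier_mat n n" unfolding M_def using T Vc Wc by auto
  have MHM: "M\<^sup>H * M = Dg d"
  proof -
    have "M\<^sup>H * M = V\<^sup>H * (T\<^sup>H * (W * (W\<^sup>H * (T * V))))" unfolding M_def using T Vc Wc
      by (simp add: adj_mult[of _ n n _ n] nn[where n=n])
    also have "\<dots> = V\<^sup>H * (T\<^sup>H * T) * V" using W T Vc by (simp add: unitary_cancel2 nn[where n=n])
    also have "\<dots> = Dg d" unfolding eV using V Dd Vc by (simp add: nn[where n=n] unitary_cancel1 unitary_cancel3)
    finally show ?thesis .
  qed
  have MMH: "M * M\<^sup>H = Dg d'"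
  proof -
    have "M * M\<^sup>H = W\<^sup>H * (T * (V * (V\<^sup>H * (T\<^sup>H * W))))" unfolding M_def using T Vc Wc
      by (simp add: adj_mult[of _ n n _ n] nn[where n=n])
    also have "\<dots> = W\<^sup>H * (T * T\<^sup>H) * W" using V T Wc by (simp add: unitary_cancel2 nn[where n=n])
    also have "\<dots> = Dg d'" unfolding eW using W Dd' Wc by (simp add: nn[where n=n] unitary_cancel1 unitary_cancel3)
    finally show ?thesis .
  qed
  have MD: "M * Dg d = Dg d' * M"
    using Mc by (simp flip: MHM MMH add: nn[where n=n])
  have Mkey: "k < n \<Longrightarrow> i < n \<Longrightarrow> M $$ (k,i) \<noteq> 0 \<Longrightarrow> d ! i = d' ! k \<and> 0 < d ! i" for k i
  proof -
    assume k: "k < n" and i: "i < n" and nz: "M $$ (k,i) \<noteq> 0"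
    from arg_cong[OF MD, of "\<lambda>A. A $$ (k,i)"]
    have "M $$ (k,i) * d ! i = d' ! k * M $$ (k,i)"
      using mult_Dg_index[of M n d k i] Dg_mult_index[of M d' n k i] Mc d d' k i by simp
    with nz have e: "d ! i = d' ! k" by (metis mult.commute mult_cancel_left of_real_eq_iff)
    have "complex_of_real (d ! i) = (M\<^sup>H * M) $$ (i,i)" using MHM i d by simp
    also have "\<dots> = col M i \<bullet>c col M i" using adj_mult_index[OF Mc Mc i i] .
    also have "\<dots> = of_real (\<Sum>l<n. (cmod (M $$ (l,i)))\<^sup>2)" unfolding cprod_self using Mc i by simp
    finally have ds: "d ! i = (\<Sum>l<n. (cmod (M $$ (l,i)))\<^sup>2)" by (simp only: of_real_eq_iff)
    have "0 < (cmod (M $$ (k,i)))\<^sup>2" using nz by simp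
    also have "\<dots> \<le> (\<Sum>l<n. (cmod (M $$ (l,i)))\<^sup>2)"
      by (rule member_le_sum) (use k in auto)
    finally show ?thesis using e ds by simp
  qed
  define F where "F = map (\<lambda>t. f (sqrt t)) d"
  define G where "G = map (\<lambda>t. g (sqrt t)) d'"
  define R where "R = map (\<lambda>t. if 0 < t then 1 / sqrt t else 0) d"
  define E where "E = map (\<lambda>t. if 0 < t then 1 else (0::real)) d"
  have lens: "length F = n" "length G = n" "length R = n" "length E = n"
    unfolding F_def G_def R_def E_def using d d' by auto
  have DF: "Dg F \<in> carrier_mat n n" and DG: "Dg G \<in> carrier_mat n n" and DR: "Dg R \<in> carrier_mat n n"
    and DE: "Dg E \<in> carrier_mat n n" using lens Dg_carrier_n by auto
  define N where "N = M * Dg R"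
  have Nc: "N \<in> carrier_mat n n" unfolding N_def using Mc DR by auto
  have MN: "M = Dg G * N * Dg F"
  proof (rule eq_matI)
    fix k i assume "k < dim_row (Dg G * N * Dg F)" "i < dim_col (Dg G * N * Dg F)"
    then have k: "k < n" and i: "i < n" using lens by auto
    have GN: "Dg G * N \<in> carrier_mat n n" using DG Nc by auto
    have "(Dg G * N * Dg F) $$ (k,i) = (Dg G * N) $$ (k,i) * F ! i"
      using mult_Dg_index[of "Dg G * N" n F k i] GN lens k i by simp
    also have "(Dg G * N) $$ (k,i) = G ! k * N $$ (k,i)"
      using Dg_mult_index[of N G n k i] Nc lens k i by simp
    also have "N $$ (k,i) = M $$ (k,i) * R ! i"
      unfolding N_def using mult_Dg_index[of M n R k i] Mc lens k i by simp
    finally have eq: "(Dg G * N * Dg F) $$ (k,i) = G ! k * (M $$ (k,i) * R ! i) * F ! i" .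
    show "M $$ (k,i) = (Dg G * N * Dg F) $$ (k,i)"
    proof (cases "M $$ (k,i) = 0")
      case True then show ?thesis using eq by simp
    next
      case False
      from Mkey[OF k i False] have e: "d ! i = d' ! k" and pos: "0 < d ! i" by auto
      have "G ! k * R ! i * F ! i = 1"
        unfolding G_def R_def F_def using k i d d' e pos fg[of "sqrt (d ! i)"]
        by (auto simp: field_simps)
      then have "complex_of_real (G ! k) * complex_of_real (R ! i) * complex_of_real (F ! i) = 1"
        by (metis of_real_1 of_real_mult)
      then show ?thesis using eq by (simp add: algebra_simps)
    qed
  qed (use Mc lens DF DG Nc in auto)
  have NHN: "N\<^sup>H * N = Dg E"
  proof -
    have "N\<^sup>H * N = Dg R * (M\<^sup>H * M) * Dg R" unfolding N_def using Mc DR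
      by (simp add: adj_mult[of _ n n _ n] nn[where n=n])
    also have "\<dots> = Dg E"
    proof (rule eq_matI)
      fix i j assume "i < dim_row (Dg E)" "j < dim_col (Dg E)"
      then have i: "i < n" and j: "j < n" using lens by auto
      show "(Dg R * (M\<^sup>H * M) * Dg R) $$ (i,j) = Dg E $$ (i,j)"
        unfolding MHM using Dg3_index[of R n d R i j] lens d i j
        by (simp add: R_def E_def rde)
    qed (use DR DE lens in auto)
    finally show ?thesis .
  qed
  define a where "a = V\<^sup>H *\<^sub>v x"
  define b where "b = W\<^sup>H *\<^sub>v y"
  have ac: "a \<in> carrier_vec n" and bc: "b \<in> carrier_vec n" unfolding a_def b_def
    using mult_mat_vec_carrier[OF adj_carrier[OF Vc] x] mult_mat_vec_carrier[OF adj_carrier[OF Wc] y] by auto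
  have xa: "x = V *\<^sub>v a" unfolding a_def using x Vc V
    by (simp add: assoc_mult_mat_vec[of _ n n _ n, symmetric] unitary_cancel3)
  have yb: "y = W *\<^sub>v b" unfolding b_def using y Wc W
    by (simp add: assoc_mult_mat_vec[of _ n n _ n, symmetric] unitary_cancel3)
  define u where "u = Dg F *\<^sub>v a"
  define v where "v = Dg G *\<^sub>v b"
  have uc: "u \<in> carrier_vec n" and vc: "v \<in> carrier_vec n" unfolding u_def v_def
    using DF DG ac bc by auto
  have Nu: "N *\<^sub>v u \<in> carrier_vec n" using Nc uc by auto
  have ui: "i < n \<Longrightarrow> u $ i = F ! i * a $ i" for i
    unfolding u_def using Dg_mult_vec[of a F i] ac lens by simp
  have vi: "i < n \<Longrightarrow> v $ i = G ! i * b $ i" for i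
    unfolding v_def using Dg_mult_vec[of b G i] bc lens by simp
  have "(T *\<^sub>v x) \<bullet>c y = (W\<^sup>H *\<^sub>v (T *\<^sub>v x)) \<bullet>c b"
    unfolding yb using cprod_adj[of "W\<^sup>H" n n "T *\<^sub>v x" b] Wc T x bc by auto
  also have "W\<^sup>H *\<^sub>v (T *\<^sub>v x) = M *\<^sub>v a" unfolding M_def xa using Wc T Vc ac
    by (simp add: assoc_mult_mat_vec[of _ n n _ n])
  also have "M *\<^sub>v a = Dg G *\<^sub>v (N *\<^sub>v u)" unfolding MN u_def using DG Nc DF ac
    by (simp add: assoc_mult_mat_vec[of _ n n _ n])
  also have "(Dg G *\<^sub>v (N *\<^sub>v u)) \<bullet>c b = (N *\<^sub>v u) \<bullet>c v"
    unfolding v_def using cprod_adj[of "Dg G" n n "N *\<^sub>v u" b] DG Nu bc by auto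
  finally have eq: "(T *\<^sub>v x) \<bullet>c y = (N *\<^sub>v u) \<bullet>c v" .
  have "(N *\<^sub>v u) \<bullet>c (N *\<^sub>v u) = u \<bullet>c (Dg E *\<^sub>v u)"
    using cprod_adj[of N n n u "N *\<^sub>v u"] Nc uc Nu NHN
    by (simp add: assoc_mult_mat_vec[of _ n n _ n, symmetric])
  also have "\<dots> = cnj ((Dg E *\<^sub>v u) \<bullet>c u)" using cprod_swap[of u n] uc DE by auto
  also have "(Dg E *\<^sub>v u) \<bullet>c u = complex_of_real (\<Sum>i<n. E ! i * (cmod (u $ i))\<^sup>2)"
    using Dg_qf[of u E] uc lens by simp
  finally have "complex_of_real (nsq (N *\<^sub>v u)) = complex_of_real (\<Sum>i<n. E ! i * (cmod (u $ i))\<^sup>2)"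
    unfolding cprod_self_nsq by (simp only: complex_cnj_complex_of_real)
  then have "nsq (N *\<^sub>v u) = (\<Sum>i<n. E ! i * (cmod (u $ i))\<^sup>2)" by (simp only: of_real_eq_iff)
  also have "\<dots> \<le> (\<Sum>i<n. (cmod (u $ i))\<^sup>2)"
    by (rule sum_mono) (use d in \<open>auto simp: E_def\<close>)
  also have "\<dots> = (\<Sum>i<n. (f (sqrt (d!i)))\<^sup>2 * (cmod (a$i))\<^sup>2)"
    using d by (intro sum.cong refl) (simp add: ui norm_mult power_mult_distrib F_def)
  finally have nNu: "nsq (N *\<^sub>v u) \<le> (\<Sum>i<n. (f (sqrt (d!i)))\<^sup>2 * (cmod (a$i))\<^sup>2)" .
  have nv: "nsq v = (\<Sum>k<n. (g (sqrt (d'!k)))\<^sup>2 * (cmod (b$k))\<^sup>2)"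
    unfolding nsq_def using vc d'
    by (intro sum.cong) (auto simp: vi norm_mult power_mult_distrib G_def)
  have "(cmod ((T *\<^sub>v x) \<bullet>c y))\<^sup>2 \<le> nsq (N *\<^sub>v u) * nsq v" unfolding eq by (rule cs[OF Nu vc])
  also have "\<dots> \<le> (\<Sum>i<n. (f (sqrt (d!i)))\<^sup>2 * (cmod (a$i))\<^sup>2) * nsq v"
    by (rule mult_right_mono[OF nNu nsq_nonneg])
  finally show ?thesis unfolding nv a_def b_def .
qed


lemma kernel_exists:
  fixes rs :: "complex vec list"
  assumes rs: "set rs \<subseteq> carrier_vec N" and len: "length rs < N"
  shows "\<exists>z\<in>carrier_vec N. z \<noteq> 0\<^sub>v N \<and> (\<forall>r\<in>set rs. r \<bullet> z = 0)"
proof -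
  define c where "c i = (if i < length rs then rs ! i else 0\<^sub>v N)" for i
  have ci: "c i \<in> carrier_vec N" for i
  proof (cases "i < length rs")
    case True
    then have "rs ! i \<in> set rs" by (rule nth_mem)
    then show ?thesis using rs True unfolding c_def by auto
  qed (auto simp: c_def)
  have cc: "c \<in> {0..<N} \<rightarrow> carrier_vec N" using ci by auto
  define A where "A = mat\<^sub>r N N (\<lambda>i. if i = N - 1 then 0\<^sub>v N else c i)"
  have Ac: "A \<in> carrier_mat N N" unfolding A_def by auto
  have "det A = 0" unfolding A_def by (rule det_row_0[OF _ cc], use len in auto)
  then obtain z where z: "z \<in> carrier_vec N" "z \<noteq> 0\<^sub>v N" "A *\<^sub>v z = 0\<^sub>v N"
    using det_0_iff_vec_prod_zero_field[OF Ac] by auto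
  have "\<forall>r\<in>set rs. r \<bullet> z = 0"
  proof
    fix r assume "r \<in> set rs"
    then obtain i where i: "i < length rs" and r: "r = rs ! i" by (auto simp: in_set_conv_nth)
    have iN: "i < N" "i \<noteq> N - 1" using i len by auto
    have rc: "dim_vec r = N" using ci[of i] i unfolding c_def r by auto
    have "row A i = r" unfolding A_def using iN i rc by (simp add: c_def r)
    moreover have "(A *\<^sub>v z) $ i = 0" using z(3) iN by simp
    ultimately show "r \<bullet> z = 0" using iN Ac by simp
  qed
  then show ?thesis using z by blast
qed

lemma rs_desc: assumes "i \<le> k" "k < length xs"
  shows "rev (sort xs) ! k \<le> rev (sort (xs::real list)) ! i"
proof -
  let ?n = "length xs"
  have "rev (sort xs) ! k = sort xs ! (?n - Suc k)" using assms by (simp add: rev_nth)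
  moreover have "rev (sort xs) ! i = sort xs ! (?n - Suc i)" using assms by (simp add: rev_nth)
  ultimately show ?thesis using assms by (simp add: sorted_nth_mono)
qed

lemma card_filter_mset: assumes "mset xs = mset ys"
  shows "card {i. i < length xs \<and> P (xs!i)} = card {i. i < length ys \<and> P (ys!i)}"
proof -
  have "length (filter P xs) = length (filter P ys)"
    by (metis assms mset_filter size_mset)
  then show ?thesis by (simp add: length_filter_conv_card)
qed

lemma count_ge: assumes j: "1 \<le> j" "j \<le> length xs"
  shows "j \<le> card {i. i < length xs \<and> rev (sort xs) ! (j-1) \<le> (xs::real list) ! i}"
proof -
  let ?ys = "rev (sort xs)"
  have "card {i. i < length xs \<and> ?ys ! (j-1) \<le> xs ! i} = card {i. i < length ?ys \<and> ?ys ! (j-1) \<le> ?ys ! i}"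
    by (rule card_filter_mset, simp)
  moreover have "{0..<j} \<subseteq> {i. i < length ?ys \<and> ?ys ! (j-1) \<le> ?ys ! i}"
    using j rs_desc[of _ "j-1" xs] by auto
  then have "card {0..<j} \<le> card {i. i < length ?ys \<and> ?ys ! (j-1) \<le> ?ys ! i}"
    by (intro card_mono, auto)
  ultimately show ?thesis by simp
qed

lemma count_le: assumes j: "1 \<le> j" "j \<le> length xs"
  shows "length xs - j + 1 \<le> card {i. i < length xs \<and> (xs::real list) ! i \<le> rev (sort xs) ! (j-1)}"
proof -
  let ?ys = "rev (sort xs)"
  have "card {i. i < length xs \<and> xs ! i \<le> ?ys ! (j-1)} = card {i. i < length ?ys \<and> ?ys ! i \<le> ?ys ! (j-1)}"
    by (rule card_filter_mset, simp)
  moreover have "{j-1..<length xs} \<subseteq> {i. i < length ?ys \<and> ?ys ! i \<le> ?ys ! (j-1)}"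
    using j rs_desc[of "j-1" _ xs] by auto
  then have "card {j-1..<length xs} \<le> card {i. i < length ?ys \<and> ?ys ! i \<le> ?ys ! (j-1)}"
    by (intro card_mono, auto)
  ultimately show ?thesis using j by simp
qed

lemma rs_max: assumes "i < length xs" shows "(xs::real list) ! i \<le> rev (sort xs) ! 0"
proof -
  have "xs ! i \<in> set (rev (sort xs))" using assms by simp
  then obtain k where k: "k < length (rev (sort xs))" "rev (sort xs) ! k = xs ! i"
    unfolding in_set_conv_nth by blast
  then show ?thesis using rs_desc[of 0 k xs] by simp
qed

lemma rs_map: assumes "mono f" shows "rev (sort (map f xs)) = map f (rev (sort (xs::real list)))"
proof -
  have "sort (map f xs) = map f (sort xs)"
  proof (rule properties_for_sort)
    show "mset (map f (sort xs)) = mset (map f xs)" by simp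
    show "sorted (map f (sort xs))"
      by (rule sorted_map_mono) (use assms in \<open>auto simp: mono_on_def mono_def\<close>)
  qed
  then show ?thesis by (simp add: rev_map)
qed


lemma sum_split2: "(\<Sum>t<(n::nat) + n. f t) = (\<Sum>t<n. f t) + (\<Sum>t<n. f (n + t))"
proof -
  have e: "{..<n + n} = {..<n} \<union> (\<lambda>t. n + t) ` {..<n}"
  proof -
    have "x \<in> {..<n} \<union> (\<lambda>t. n + t) ` {..<n}" if x: "x < n + n" for x
    proof (cases "x < n")
      case False
      then have "x = n + (x - n)" "x - n \<in> {..<n}" using x by auto
      then show ?thesis by (metis UnI2 image_eqI)
    qed simp
    then show ?thesis by auto
  qed
  have "(\<Sum>t<n + n. f t) = (\<Sum>t<n. f t) + (\<Sum>t\<in>(\<lambda>t. n + t) ` {..<n}. f t)"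
    unfolding e by (rule sum.union_disjoint) auto
  also have "(\<Sum>t\<in>(\<lambda>t. n + t) ` {..<n}. f t) = (\<Sum>t<n. f (n + t))"
    by (rule sum.reindex_cong[of "\<lambda>t. n + t"]) (auto simp: inj_on_def)
  finally show ?thesis .
qed

lemma card_notin: assumes "I \<subseteq> {..<n}" shows "length (filter (\<lambda>i. i \<notin> I) [0..<n]) = n - card I"
proof -
  have "length (filter (\<lambda>i. i \<notin> I) [0..<n]) = card {i. i < n \<and> i \<notin> I}"
    unfolding length_filter_conv_card by (rule arg_cong[where f=card]) auto
  also have "{i. i < n \<and> i \<notin> I} = {..<n} - I" by auto
  also have "card ({..<n} - I) = n - card I" using assms by (simp add: card_Diff_subset finite_subset)
  finally show ?thesis .
qed

lemma mult_vec_zero: "(A::complex mat) \<in> carrier_mat m n \<Longrightarrow> A *\<^sub>v 0\<^sub>v n = 0\<^sub>v m"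
  by (intro eq_vecI) auto

lemma weyl:
  assumes U: "unitary_mat n U" and la: "length a = n" and V: "unitary_mat n V" and lb: "length b = n"
    and c: "0 \<le> c"
    and ineq: "\<And>x. x \<in> carrier_vec n \<Longrightarrow> (\<Sum>i<n. a!i * (cmod ((U\<^sup>H *\<^sub>v x)$i))\<^sup>2) \<le> c * (\<Sum>i<n. b!i * (cmod ((V\<^sup>H *\<^sub>v x)$i))\<^sup>2)"
    and j: "1 \<le> j" "j \<le> n"
  shows "rev (sort a) ! (j-1) \<le> c * rev (sort b) ! (j-1)"
proof -
  have Uc: "U \<in> carrier_mat n n" and Vc: "V \<in> carrier_mat n n" using U V unitary_carrier by auto
  define lam where "lam = rev (sort a) ! (j-1)"
  define mu where "mu = rev (sort b) ! (j-1)"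
  define I where "I = {i. i < n \<and> lam \<le> a ! i}"
  define K where "K = {k. k < n \<and> b ! k \<le> mu}"
  have cI: "j \<le> card I" unfolding I_def lam_def using count_ge[of j a] j la by simp
  have cK: "n - j + 1 \<le> card K" unfolding K_def mu_def using count_le[of j b] j lb by simp
  have IK: "I \<subseteq> {..<n}" "K \<subseteq> {..<n}" unfolding I_def K_def by auto
  have cIn: "card I \<le> n" and cKn: "card K \<le> n" using IK card_mono[of "{..<n}"] by auto
  define rowU where "rowU r = vec (n + n) (\<lambda>t. if t < n then U $$ (r,t) else - V $$ (r, t - n))" for r
  define rs where "rs = map rowU [0..<n] @ map (\<lambda>i. unit_vec (n + n) i) (filter (\<lambda>i. i \<notin> I) [0..<n])
      @ map (\<lambda>k. unit_vec (n + n) (n + k)) (filter (\<lambda>k. k \<notin> K) [0..<n])"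
  have lrs: "length rs = n + (n - card I) + (n - card K)"
    unfolding rs_def using card_notin[OF IK(1)] card_notin[OF IK(2)] by simp
  have lrs2: "length rs < n + n" unfolding lrs using cI cK cIn cKn j by linarith
  have rsc: "set rs \<subseteq> carrier_vec (n + n)" unfolding rs_def rowU_def by auto
  from kernel_exists[OF rsc lrs2] obtain z where z: "z \<in> carrier_vec (n + n)" "z \<noteq> 0\<^sub>v (n + n)"
    and zr: "\<And>r. r \<in> set rs \<Longrightarrow> r \<bullet> z = 0" by auto
  define al where "al = vec n (\<lambda>i. z $ i)"
  define be where "be = vec n (\<lambda>k. z $ (n + k))"
  have alc: "al \<in> carrier_vec n" and bec: "be \<in> carrier_vec n" unfolding al_def be_def by auto
  have UV: "U *\<^sub>v al = V *\<^sub>v be"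
  proof (rule eq_vecI)
    fix r assume "r < dim_vec (V *\<^sub>v be)"
    then have r: "r < n" using Vc by auto
    have "rowU r \<in> set rs" unfolding rs_def using r by auto
    then have "0 = rowU r \<bullet> z" using zr by simp
    also have "\<dots> = (\<Sum>t<n + n. rowU r $ t * z $ t)" using z unfolding rowU_def
      by (simp add: scalar_prod_def atLeast0LessThan)
    also have "\<dots> = (\<Sum>t<n. U $$ (r,t) * z $ t) + (\<Sum>t<n. - V $$ (r,t) * z $ (n + t))"
      unfolding sum_split2 unfolding rowU_def by simp
    finally have "(\<Sum>t<n. U $$ (r,t) * z $ t) = (\<Sum>t<n. V $$ (r,t) * z $ (n + t))"
      by (simp add: sum_negf)
    then show "(U *\<^sub>v al) $ r = (V *\<^sub>v be) $ r"
      using r Uc Vc unfolding al_def be_def by (simp add: scalar_prod_def atLeast0LessThan)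
  qed (use Uc Vc in auto)
  have al0: "i < n \<Longrightarrow> i \<notin> I \<Longrightarrow> al $ i = 0" for i
  proof -
    assume i: "i < n" "i \<notin> I"
    have "unit_vec (n + n) i \<in> set rs" unfolding rs_def using i by auto
    then have "unit_vec (n + n) i \<bullet> z = 0" by (rule zr)
    then show ?thesis using i z unfolding al_def by simp
  qed
  have be0: "k < n \<Longrightarrow> k \<notin> K \<Longrightarrow> be $ k = 0" for k
  proof -
    assume k: "k < n" "k \<notin> K"
    have "unit_vec (n + n) (n + k) \<in> set rs" unfolding rs_def using k by auto
    then have "unit_vec (n + n) (n + k) \<bullet> z = 0" by (rule zr)
    then show ?thesis using k z unfolding be_def by simp
  qed
  define x where "x = U *\<^sub>v al"
  have xc: "x \<in> carrier_vec n" unfolding x_def using Uc alc by auto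
  have Ux: "U\<^sup>H *\<^sub>v x = al" unfolding x_def using Uc alc U
    by (simp add: assoc_mult_mat_vec[of _ n n _ n, symmetric] unitary_cancel3)
  have Vx: "V\<^sup>H *\<^sub>v x = be" unfolding x_def UV using Vc bec V
    by (simp add: assoc_mult_mat_vec[of _ n n _ n, symmetric] unitary_cancel3)
  have alnz: "al \<noteq> 0\<^sub>v n"
  proof
    assume a0: "al = 0\<^sub>v n"
    have "be = V\<^sup>H *\<^sub>v x" using Vx by simp
    also have "x = 0\<^sub>v n" unfolding x_def a0 using Uc by (simp add: mult_vec_zero)
    finally have b0: "be = 0\<^sub>v n" using mult_vec_zero[OF adj_carrier[OF Vc]] by simp
    have "z = 0\<^sub>v (n + n)"
    proof (rule eq_vecI)
      fix t assume "t < dim_vec (0\<^sub>v (n + n) :: complex vec)"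
      then have t: "t < n + n" by simp
      show "z $ t = 0\<^sub>v (n + n) $ t"
      proof (cases "t < n")
        case True
        then have "al $ t = z $ t" unfolding al_def by simp
        then show ?thesis using a0 True t by simp
      next
        case False
        then have "n + (t - n) = t" by simp
        then have "be $ (t - n) = z $ t" using t False unfolding be_def by simp
        then show ?thesis using b0 False t by simp
      qed
    qed (use z in auto)
    then show False using z by simp
  qed
  have spos: "0 < nsq al"
  proof -
    obtain i where i: "i < n" "al $ i \<noteq> 0" using alnz alc by (metis eq_vecI carrier_vecD index_zero_vec)
    have "0 < (cmod (al $ i))\<^sup>2" using i by simp
    also have "\<dots> \<le> nsq al" unfolding nsq_def using alc i
      by (intro member_le_sum) auto
    finally show ?thesis .
  qed
  have nab: "nsq be = nsq al"
    using nsq_unitary[OF U xc] nsq_unitary[OF V xc] Ux Vx by simp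
  have "lam * nsq al = (\<Sum>i<n. lam * (cmod (al $ i))\<^sup>2)"
    unfolding nsq_def using alc by (simp add: sum_distrib_left)
  also have "\<dots> \<le> (\<Sum>i<n. a!i * (cmod (al $ i))\<^sup>2)"
  proof (rule sum_mono)
    fix i assume "i \<in> {..<n}"
    then show "lam * (cmod (al $ i))\<^sup>2 \<le> a!i * (cmod (al $ i))\<^sup>2"
      using al0[of i] by (cases "i \<in> I") (auto simp: I_def intro: mult_right_mono)
  qed
  also have "\<dots> \<le> c * (\<Sum>i<n. b!i * (cmod (be $ i))\<^sup>2)" using ineq[OF xc] Ux Vx by simp
  also have "\<dots> \<le> c * (\<Sum>i<n. mu * (cmod (be $ i))\<^sup>2)"
  proof (rule mult_left_mono[OF sum_mono c])
    fix i assume "i \<in> {..<n}"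
    then show "b!i * (cmod (be $ i))\<^sup>2 \<le> mu * (cmod (be $ i))\<^sup>2"
      using be0[of i] by (cases "i \<in> K") (auto simp: K_def intro: mult_right_mono)
  qed
  also have "\<dots> = c * mu * nsq be"
    unfolding nsq_def using bec by (simp add: sum_distrib_left mult.assoc)
  also have "\<dots> = c * mu * nsq al" using nab by simp
  finally have "lam * nsq al \<le> (c * mu) * nsq al" .
  then show ?thesis unfolding lam_def mu_def using spos by simp
qed


lemma spec_adj: assumes "U \<in> carrier_mat n n" "length d = n"
  shows "(U * Dg d * U\<^sup>H)\<^sup>H = U * Dg d * U\<^sup>H"
proof -
  have D: "Dg d \<in> carrier_mat n n" using assms Dg_carrier_n by auto
  show ?thesis using assms D by (simp add: adj_mult[of _ n n _ n] nn[where n=n])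
qed

lemma sing_vals_psd:
  assumes U: "unitary_mat n U" and lp: "length p = n" and p0: "\<forall>x\<in>set p. 0 \<le> x"
    and M: "M = U * Dg p * U\<^sup>H"
  shows "sing_vals M = rev (sort p)"
proof -
  have Uc: "U \<in> carrier_mat n n" using U unitary_carrier by auto
  have D: "Dg p \<in> carrier_mat n n" using lp Dg_carrier_n by auto
  have "M\<^sup>H * M = U * (Dg p * Dg p) * U\<^sup>H"
    unfolding M spec_adj[OF Uc lp] using Uc D U by (simp add: nn[where n=n] unitary_cancel1)
  also have "\<dots> = U * Dg (map (\<lambda>x. x\<^sup>2) p) * U\<^sup>H" by (simp add: Dg_sq)
  finally have e: "M\<^sup>H * M = U * Dg (map (\<lambda>x. x\<^sup>2) p) * U\<^sup>H" .
  have "map sqrt (map (\<lambda>x. x\<^sup>2) p) = p" using p0 by (induct p) auto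
  then have ab: "mat_abs M = U * Dg p * U\<^sup>H" unfolding mat_abs_def using mat_fun_eq[OF U _ e] lp by simp
  have me: "mset (eigenvalue_list (mat_abs M)) = mset (map complex_of_real p)"
    by (rule eig_mset[OF U lp ab])
  have ms: "mset (map Re (eigenvalue_list (mat_abs M))) = mset p"
  proof -
    have "mset (map Re (eigenvalue_list (mat_abs M))) = image_mset Re (mset (eigenvalue_list (mat_abs M)))"
      by simp
    also have "\<dots> = image_mset Re (mset (map complex_of_real p))" by (simp only: me)
    also have "\<dots> = mset (map Re (map complex_of_real p))" by (simp only: mset_map)
    also have "map Re (map complex_of_real p) = p" by (induct p) auto
    finally show ?thesis .
  qed
  show ?thesis unfolding sing_vals_def using sort_mset_eq[OF ms] by (simp only:)
qed

lemma psd_nonneg: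
  assumes U: "unitary_mat n U" and lp: "length p = n"
    and pos: "\<And>x. x \<in> carrier_vec n \<Longrightarrow> 0 \<le> (\<Sum>i<n. p!i * (cmod ((U\<^sup>H *\<^sub>v x)$i))\<^sup>2)"
  shows "\<forall>x\<in>set p. 0 \<le> x"
proof
  fix t assume "t \<in> set p"
  then obtain i where i: "i < n" and t: "t = p ! i" using lp by (auto simp: in_set_conv_nth)
  have Uc: "U \<in> carrier_mat n n" using U unitary_carrier by auto
  define x where "x = U *\<^sub>v unit_vec n i"
  have xc: "x \<in> carrier_vec n" unfolding x_def using Uc by auto
  have "U\<^sup>H *\<^sub>v x = unit_vec n i" unfolding x_def using Uc U
    by (simp add: assoc_mult_mat_vec[of _ n n _ n, symmetric] unitary_cancel3)
  then have "(\<Sum>k<n. p!k * (cmod ((U\<^sup>H *\<^sub>v x)$k))\<^sup>2) = (\<Sum>k<n. if k = i then p ! i else 0)"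
    using i by (intro sum.cong) auto
  also have "\<dots> = p ! i" using i by simp
  finally show "0 \<le> t" using pos[OF xc] t by simp
qed

lemma sq_comb:
  fixes X Y a b c d :: real
  assumes "0 \<le> X" "0 \<le> Y" "0 \<le> a" "0 \<le> b" "0 \<le> c" "0 \<le> d" "X\<^sup>2 \<le> a * b" "Y\<^sup>2 \<le> c * d"
  shows "(X + Y)\<^sup>2 \<le> (a + c) * (b + d)"
proof -
  have e1: "(2 * X * Y)\<^sup>2 = 4 * (X\<^sup>2 * Y\<^sup>2)" by (simp add: power2_eq_square)
  have ab: "0 \<le> a * b" using assms by simp
  have "X\<^sup>2 * Y\<^sup>2 \<le> (a * b) * (c * d)"
    by (rule mult_mono) (use assms ab in auto)
  then have e2: "(2 * X * Y)\<^sup>2 \<le> 4 * ((a * b) * (c * d))" unfolding e1 by simp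
  have e3: "(a * d + c * b)\<^sup>2 = (a * d - c * b)\<^sup>2 + 4 * ((a * b) * (c * d))"
    unfolding power2_eq_square by (simp add: algebra_simps)
  have "0 \<le> (a * d - c * b)\<^sup>2" by simp
  then have "(2 * X * Y)\<^sup>2 \<le> (a * d + c * b)\<^sup>2" using e2 e3 by linarith
  moreover have "0 \<le> a * d + c * b" using assms by simp
  ultimately have e4: "2 * X * Y \<le> a * d + c * b" by (rule power2_le_imp_le)
  have e5: "(X + Y)\<^sup>2 = X\<^sup>2 + Y\<^sup>2 + 2 * X * Y" by (simp add: power2_sum)
  have e6: "(a + c) * (b + d) = a * b + c * d + (a * d + c * b)" by (simp add: algebra_simps)
  show ?thesis unfolding e5 e6 using e4 assms(7,8) by linarith
qed

lemma qf_add: assumes "(M1::complex mat) \<in> carrier_mat n n" "M2 \<in> carrier_mat n n" "x \<in> carrier_vec n"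
  shows "((M1 + M2) *\<^sub>v x) \<bullet>c x = (M1 *\<^sub>v x) \<bullet>c x + (M2 *\<^sub>v x) \<bullet>c x"
  using assms by (simp add: add_mult_distrib_mat_vec[of _ n n] add_scalar_prod_distrib[of _ n])


lemma spec_fun:
  assumes M: "(M::complex mat) \<in> carrier_mat n n"
  shows "\<exists>V d. unitary_mat n V \<and> length d = n \<and> M * M\<^sup>H = V * Dg d * V\<^sup>H \<and> (\<forall>x\<in>set d. 0 \<le> x)
     \<and> mat_abs (M\<^sup>H) = V * Dg (map sqrt d) * V\<^sup>H"
  using sing_vals_eq[OF adj_carrier[OF M]] unfolding adj_adj by blast

lemma qf_two:
  assumes U1: "unitary_mat n U1" and U2: "unitary_mat n U2" and l1: "length c1 = n" and l2: "length c2 = n"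
    and W: "unitary_mat n W" and lw: "length w = n"
    and eq: "U1 * Dg c1 * U1\<^sup>H + U2 * Dg c2 * U2\<^sup>H = W * Dg w * W\<^sup>H"
    and x: "x \<in> carrier_vec n"
  shows "(\<Sum>i<n. w!i * (cmod ((W\<^sup>H *\<^sub>v x)$i))\<^sup>2) =
     (\<Sum>i<n. c1!i * (cmod ((U1\<^sup>H *\<^sub>v x)$i))\<^sup>2) + (\<Sum>i<n. c2!i * (cmod ((U2\<^sup>H *\<^sub>v x)$i))\<^sup>2)"
proof -
  have U1c: "U1 \<in> carrier_mat n n" and U2c: "U2 \<in> carrier_mat n n" using U1 U2 unitary_carrier by auto
  have D1: "Dg c1 \<in> carrier_mat n n" and D2: "Dg c2 \<in> carrier_mat n n" using l1 l2 Dg_carrier_n by auto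
  have "complex_of_real (\<Sum>i<n. w!i * (cmod ((W\<^sup>H *\<^sub>v x)$i))\<^sup>2) = ((W * Dg w * W\<^sup>H) *\<^sub>v x) \<bullet>c x"
    using qf_spec[OF W lw x] by simp
  also have "\<dots> = ((U1 * Dg c1 * U1\<^sup>H) *\<^sub>v x) \<bullet>c x + ((U2 * Dg c2 * U2\<^sup>H) *\<^sub>v x) \<bullet>c x"
    unfolding eq[symmetric] by (rule qf_add[of _ n], use U1c U2c D1 D2 x in auto)
  also have "\<dots> = complex_of_real ((\<Sum>i<n. c1!i * (cmod ((U1\<^sup>H *\<^sub>v x)$i))\<^sup>2) + (\<Sum>i<n. c2!i * (cmod ((U2\<^sup>H *\<^sub>v x)$i))\<^sup>2))"
    using qf_spec[OF U1 l1 x] qf_spec[OF U2 l2 x] by simp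
  finally show ?thesis by (simp only: of_real_eq_iff)
qed

lemma mono_sqrt: "mono sqrt" by (auto simp: mono_def)

lemma core:
  fixes n :: nat and T S :: "complex mat" and e f g h :: "real \<Rightarrow> real"
  assumes T: "T \<in> carrier_mat n n" and S: "S \<in> carrier_mat n n"
    and fg: "\<And>t. t \<ge> 0 \<Longrightarrow> f t * g t = t"
    and eh: "\<And>t. t \<ge> 0 \<Longrightarrow> e t * h t = t"
    and j: "1 \<le> j" "j \<le> n"
  defines "P \<equiv> mat_fun (\<lambda>t. (f t)\<^sup>2) (mat_abs T) + mat_fun (\<lambda>t. (e t)\<^sup>2) (mat_abs S)"
    and "Q \<equiv> mat_fun (\<lambda>t. (g t)\<^sup>2) (mat_abs (mat_adjoint T)) + mat_fun (\<lambda>t. (h t)\<^sup>2) (mat_abs (mat_adjoint S))"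
  shows "0 \<le> op_norm Q \<and> 0 \<le> sing_val P j \<and> 0 \<le> sing_val (T + S) j \<and>
    sing_val (T + S) j \<le> sqrt (op_norm Q) * sqrt (sing_val P j)"
proof -
  obtain V1 d1 where V1: "unitary_mat n V1" and ld1: "length d1 = n" and eV1: "T\<^sup>H * T = V1 * Dg d1 * V1\<^sup>H"
    and d10: "\<forall>x\<in>set d1. 0 \<le> x" and aT: "mat_abs T = V1 * Dg (map sqrt d1) * V1\<^sup>H"
    using sing_vals_eq[OF T] by blast
  obtain V2 d2 where V2: "unitary_mat n V2" and ld2: "length d2 = n" and eV2: "S\<^sup>H * S = V2 * Dg d2 * V2\<^sup>H"
    and d20: "\<forall>x\<in>set d2. 0 \<le> x" and aS: "mat_abs S = V2 * Dg (map sqrt d2) * V2\<^sup>H"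
    using sing_vals_eq[OF S] by blast
  obtain W1 d1' where W1: "unitary_mat n W1" and ld1': "length d1' = n" and eW1: "T * T\<^sup>H = W1 * Dg d1' * W1\<^sup>H"
    and aT': "mat_abs (T\<^sup>H) = W1 * Dg (map sqrt d1') * W1\<^sup>H"
    using spec_fun[OF T] by blast
  obtain W2 d2' where W2: "unitary_mat n W2" and ld2': "length d2' = n" and eW2: "S * S\<^sup>H = W2 * Dg d2' * W2\<^sup>H"
    and aS': "mat_abs (S\<^sup>H) = W2 * Dg (map sqrt d2') * W2\<^sup>H"
    using spec_fun[OF S] by blast
  define FT where "FT = map (\<lambda>t. (f t)\<^sup>2) (map sqrt d1)"
  define ES where "ES = map (\<lambda>t. (e t)\<^sup>2) (map sqrt d2)"
  define GT where "GT = map (\<lambda>t. (g t)\<^sup>2) (map sqrt d1')"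
  define HS where "HS = map (\<lambda>t. (h t)\<^sup>2) (map sqrt d2')"
  have lens: "length FT = n" "length ES = n" "length GT = n" "length HS = n"
    unfolding FT_def ES_def GT_def HS_def using ld1 ld2 ld1' ld2' by auto
  have Pe: "P = V1 * Dg FT * V1\<^sup>H + V2 * Dg ES * V2\<^sup>H" unfolding P_def FT_def ES_def
    using mat_fun_eq[OF V1 _ aT] mat_fun_eq[OF V2 _ aS] ld1 ld2 by simp
  have Qe: "Q = W1 * Dg GT * W1\<^sup>H + W2 * Dg HS * W2\<^sup>H" unfolding Q_def GT_def HS_def
    using mat_fun_eq[OF W1 _ aT'] mat_fun_eq[OF W2 _ aS'] ld1' ld2' by simp
  have V1c: "V1 \<in> carrier_mat n n" and V2c: "V2 \<in> carrier_mat n n"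
    and W1c: "W1 \<in> carrier_mat n n" and W2c: "W2 \<in> carrier_mat n n"
    using V1 V2 W1 W2 unitary_carrier by auto
  have Ds: "Dg FT \<in> carrier_mat n n" "Dg ES \<in> carrier_mat n n" "Dg GT \<in> carrier_mat n n" "Dg HS \<in> carrier_mat n n"
    using lens Dg_carrier_n by auto
  have Pc: "P \<in> carrier_mat n n" unfolding Pe using V1c V2c Ds by auto
  have Qc: "Q \<in> carrier_mat n n" unfolding Qe using W1c W2c Ds by auto
  have hP: "P\<^sup>H = P" unfolding Pe
    using adj_add[of "V1 * Dg FT * V1\<^sup>H" n n "V2 * Dg ES * V2\<^sup>H"] spec_adj[OF V1c lens(1)] spec_adj[OF V2c lens(2)]
      V1c V2c Ds by auto
  have hQ: "Q\<^sup>H = Q" unfolding Qe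
    using adj_add[of "W1 * Dg GT * W1\<^sup>H" n n "W2 * Dg HS * W2\<^sup>H"] spec_adj[OF W1c lens(3)] spec_adj[OF W2c lens(4)]
      W1c W2c Ds by auto
  obtain Wp p where Wp: "unitary_mat n Wp" and lp: "length p = n" and eP: "P = Wp * Dg p * Wp\<^sup>H"
    using spectral[OF Pc hP] by blast
  obtain Wq q where Wq: "unitary_mat n Wq" and lq: "length q = n" and eQ: "Q = Wq * Dg q * Wq\<^sup>H"
    using spectral[OF Qc hQ] by blast
  have TSc: "T + S \<in> carrier_mat n n" using T S by auto
  obtain Va a where Va: "unitary_mat n Va" and la: "length a = n" and eA: "(T + S)\<^sup>H * (T + S) = Va * Dg a * Va\<^sup>H"
    and a0: "\<forall>x\<in>set a. 0 \<le> x" and svTS: "sing_vals (T + S) = rev (sort (map sqrt a))"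
    using sing_vals_eq[OF TSc] by blast
  define pT where "pT x = (\<Sum>i<n. (f (sqrt (d1!i)))\<^sup>2 * (cmod ((V1\<^sup>H *\<^sub>v x)$i))\<^sup>2)" for x
  define pS where "pS x = (\<Sum>i<n. (e (sqrt (d2!i)))\<^sup>2 * (cmod ((V2\<^sup>H *\<^sub>v x)$i))\<^sup>2)" for x
  define qT where "qT x = (\<Sum>i<n. (g (sqrt (d1'!i)))\<^sup>2 * (cmod ((W1\<^sup>H *\<^sub>v x)$i))\<^sup>2)" for x
  define qS where "qS x = (\<Sum>i<n. (h (sqrt (d2'!i)))\<^sup>2 * (cmod ((W2\<^sup>H *\<^sub>v x)$i))\<^sup>2)" for x
  have pnn: "0 \<le> pT x" "0 \<le> pS x" "0 \<le> qT x" "0 \<le> qS x" for x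
    unfolding pT_def pS_def qT_def qS_def by (auto intro!: sum_nonneg)
  have pP: "x \<in> carrier_vec n \<Longrightarrow> (\<Sum>i<n. p!i * (cmod ((Wp\<^sup>H *\<^sub>v x)$i))\<^sup>2) = pT x + pS x" for x
    using qf_two[OF V1 V2 lens(1,2) Wp lp Pe[unfolded eP, symmetric]] ld1 ld2
    unfolding pT_def pS_def FT_def ES_def by simp
  have qQ: "x \<in> carrier_vec n \<Longrightarrow> (\<Sum>i<n. q!i * (cmod ((Wq\<^sup>H *\<^sub>v x)$i))\<^sup>2) = qT x + qS x" for x
    using qf_two[OF W1 W2 lens(3,4) Wq lq Qe[unfolded eQ, symmetric]] ld1' ld2'
    unfolding qT_def qS_def GT_def HS_def by simp
  have p0: "\<forall>x\<in>set p. 0 \<le> x" using psd_nonneg[OF Wp lp] pP pnn by (metis add_nonneg_nonneg)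
  have q0: "\<forall>x\<in>set q. 0 \<le> x" using psd_nonneg[OF Wq lq] qQ pnn by (metis add_nonneg_nonneg)
  have svP: "sing_vals P = rev (sort p)" using sing_vals_psd[OF Wp lp p0 eP] .
  have svQ: "sing_vals Q = rev (sort q)" using sing_vals_psd[OF Wq lq q0 eQ] .
  define C where "C = rev (sort q) ! 0"
  have opQ: "op_norm Q = C" unfolding op_norm_def sing_val_def svQ C_def by simp
  have n0: "0 < n" using j by simp
  have qC: "i < n \<Longrightarrow> q ! i \<le> C" for i unfolding C_def using rs_max[of i q] lq by simp
  have C0: "0 \<le> C" using qC[OF n0] q0 lq n0 by (metis nth_mem order_trans)
  have qbound: "y \<in> carrier_vec n \<Longrightarrow> qT y + qS y \<le> C * nsq y" for y
  proof -
    assume y: "y \<in> carrier_vec n"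
    have "qT y + qS y = (\<Sum>i<n. q!i * (cmod ((Wq\<^sup>H *\<^sub>v y)$i))\<^sup>2)" using qQ[OF y] by simp
    also have "\<dots> \<le> (\<Sum>i<n. C * (cmod ((Wq\<^sup>H *\<^sub>v y)$i))\<^sup>2)"
      by (rule sum_mono) (use qC in \<open>auto intro: mult_right_mono\<close>)
    also have "\<dots> = C * nsq (Wq\<^sup>H *\<^sub>v y)"
    proof -
      have "dim_vec (Wq\<^sup>H *\<^sub>v y) = n" using Wq unitary_carrier by auto
      then show ?thesis unfolding nsq_def by (simp add: sum_distrib_left)
    qed
    also have "\<dots> = C * nsq y" using nsq_unitary[OF Wq y] by simp
    finally show ?thesis .
  qed
  have ineq: "x \<in> carrier_vec n \<Longrightarrow> (\<Sum>i<n. a!i * (cmod ((Va\<^sup>H *\<^sub>v x)$i))\<^sup>2) \<le> C * (\<Sum>i<n. p!i * (cmod ((Wp\<^sup>H *\<^sub>v x)$i))\<^sup>2)" for x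
  proof -
    assume x: "x \<in> carrier_vec n"
    define y where "y = (T + S) *\<^sub>v x"
    have yc: "y \<in> carrier_vec n" unfolding y_def using TSc x by auto
    have Tx: "T *\<^sub>v x \<in> carrier_vec n" and Sx: "S *\<^sub>v x \<in> carrier_vec n" using T S x by auto
    have "complex_of_real (\<Sum>i<n. a!i * (cmod ((Va\<^sup>H *\<^sub>v x)$i))\<^sup>2) = (((T + S)\<^sup>H * (T + S)) *\<^sub>v x) \<bullet>c x"
      unfolding eA using qf_spec[OF Va la x] by simp
    also have "((T + S)\<^sup>H * (T + S)) *\<^sub>v x = (T + S)\<^sup>H *\<^sub>v y"
      unfolding y_def using TSc x by (simp add: assoc_mult_mat_vec[of _ n n _ n])
    also have "((T + S)\<^sup>H *\<^sub>v y) \<bullet>c x = y \<bullet>c y"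
      using cprod_adj[of "(T + S)\<^sup>H" n n y x] TSc yc x unfolding y_def by simp
    also have "\<dots> = complex_of_real (nsq y)" by (rule cprod_self_nsq)
    finally have LA: "(\<Sum>i<n. a!i * (cmod ((Va\<^sup>H *\<^sub>v x)$i))\<^sup>2) = nsq y" by (simp only: of_real_eq_iff)
    have "complex_of_real (nsq y) = y \<bullet>c y" by (simp add: cprod_self_nsq)
    also have "\<dots> = (T *\<^sub>v x + S *\<^sub>v x) \<bullet>c y" unfolding y_def using T S x
      by (simp add: add_mult_distrib_mat_vec[of _ n n])
    also have "\<dots> = (T *\<^sub>v x) \<bullet>c y + (S *\<^sub>v x) \<bullet>c y"
      using Tx Sx yc by (simp add: add_scalar_prod_distrib[of _ n])
    finally have "nsq y = cmod ((T *\<^sub>v x) \<bullet>c y + (S *\<^sub>v x) \<bullet>c y)"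
      by (metis norm_of_real nsq_nonneg abs_of_nonneg)
    also have "\<dots> \<le> cmod ((T *\<^sub>v x) \<bullet>c y) + cmod ((S *\<^sub>v x) \<bullet>c y)" by (rule norm_triangle_ineq)
    finally have ny: "nsq y \<le> cmod ((T *\<^sub>v x) \<bullet>c y) + cmod ((S *\<^sub>v x) \<bullet>c y)" .
    have mT: "(cmod ((T *\<^sub>v x) \<bullet>c y))\<^sup>2 \<le> pT x * qT y"
      unfolding pT_def qT_def by (rule mixed[OF T fg V1 ld1 eV1 d10 W1 ld1' eW1 x yc])
    have mS: "(cmod ((S *\<^sub>v x) \<bullet>c y))\<^sup>2 \<le> pS x * qS y"
      unfolding pS_def qS_def by (rule mixed[OF S eh V2 ld2 eV2 d20 W2 ld2' eW2 x yc])
    have "(nsq y)\<^sup>2 \<le> (cmod ((T *\<^sub>v x) \<bullet>c y) + cmod ((S *\<^sub>v x) \<bullet>c y))\<^sup>2"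
      using ny nsq_nonneg by (simp add: power_mono)
    also have "\<dots> \<le> (pT x + pS x) * (qT y + qS y)"
      by (rule sq_comb) (use mT mS pnn in auto)
    also have "\<dots> \<le> (pT x + pS x) * (C * nsq y)"
      by (rule mult_left_mono[OF qbound[OF yc]]) (use pnn in auto)
    finally have sq: "(nsq y)\<^sup>2 \<le> (C * (pT x + pS x)) * nsq y" by (simp add: algebra_simps)
    have "nsq y \<le> C * (pT x + pS x)"
    proof (cases "nsq y = 0")
      case True then show ?thesis using C0 pnn by simp
    next
      case False
      then have "0 < nsq y" using nsq_nonneg[of y] by simp
      then show ?thesis using sq by (simp add: power2_eq_square)
    qed
    then show ?thesis unfolding LA pP[OF x] .
  qed
  have w: "rev (sort a) ! (j-1) \<le> C * rev (sort p) ! (j-1)" by (rule weyl[OF Va la Wp lp C0 ineq j])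
  have jn: "j - 1 < n" using j by simp
  have sTS: "sing_val (T + S) j = sqrt (rev (sort a) ! (j-1))"
    unfolding sing_val_def svTS rs_map[OF mono_sqrt] using jn la by simp
  have sP: "sing_val P j = rev (sort p) ! (j-1)" unfolding sing_val_def svP ..
  have sP0: "0 \<le> rev (sort p) ! (j-1)"
  proof -
    have "rev (sort p) ! (j-1) \<in> set (rev (sort p))" using jn lp by (intro nth_mem) simp
    then show ?thesis using p0 by simp
  qed
  have sA0: "0 \<le> rev (sort a) ! (j-1)"
  proof -
    have "rev (sort a) ! (j-1) \<in> set (rev (sort a))" using jn la by (intro nth_mem) simp
    then show ?thesis using a0 by simp
  qed
  have "sqrt (rev (sort a) ! (j-1)) \<le> sqrt (C * rev (sort p) ! (j-1))" using w by simp
  also have "\<dots> = sqrt C * sqrt (rev (sort p) ! (j-1))" by (simp add: real_sqrt_mult)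
  finally show ?thesis unfolding sTS sP opQ using C0 sP0 sA0 by simp
qed


lemma mat_fun_abs_dim: assumes M: "(M::complex mat) \<in> carrier_mat n n"
  shows "dim_row (mat_fun \<phi> (mat_abs M)) = n"
proof -
  obtain V d where V: "unitary_mat n V" and ld: "length d = n" and ab: "mat_abs M = V * Dg (map sqrt d) * V\<^sup>H"
    using sing_vals_eq[OF M] by blast
  have "mat_fun \<phi> (mat_abs M) = V * Dg (map \<phi> (map sqrt d)) * V\<^sup>H"
    using mat_fun_eq[OF V _ ab] ld by simp
  then show ?thesis using V unitary_carrier by auto
qed

lemma schatten_step:
  fixes s t :: "nat \<Rightarrow> real" and C p :: real
  assumes p: "0 < p" and C: "0 \<le> C"
    and st: "\<And>j. j \<in> {1..n} \<Longrightarrow> 0 \<le> s j \<and> 0 \<le> t j \<and> s j \<le> sqrt C * sqrt (t j)"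
  shows "(\<Sum>j=1..n. s j powr p) powr (1 / p) \<le> sqrt C * sqrt ((\<Sum>j=1..n. t j powr (p / 2)) powr (1 / (p / 2)))"
proof -
  define X where "X = (\<Sum>j=1..n. t j powr (p / 2))"
  have X0: "0 \<le> X" unfolding X_def by (auto intro: sum_nonneg)
  have "(\<Sum>j=1..n. s j powr p) \<le> (\<Sum>j=1..n. sqrt C powr p * t j powr (p / 2))"
  proof (rule sum_mono)
    fix j assume j: "j \<in> {1..n}"
    have "s j powr p \<le> (sqrt C * sqrt (t j)) powr p"
      using st[OF j] p by (intro powr_mono2) auto
    also have "\<dots> = sqrt C powr p * sqrt (t j) powr p" by (rule powr_mult)
    also have "sqrt (t j) powr p = t j powr (p / 2)"
      using st[OF j] by (simp add: powr_half_sqrt[symmetric] powr_powr)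
    finally show "s j powr p \<le> sqrt C powr p * t j powr (p / 2)" .
  qed
  also have "\<dots> = sqrt C powr p * X" unfolding X_def by (simp add: sum_distrib_left)
  finally have le: "(\<Sum>j=1..n. s j powr p) \<le> sqrt C powr p * X" .
  have "(\<Sum>j=1..n. s j powr p) powr (1 / p) \<le> (sqrt C powr p * X) powr (1 / p)"
    using le p by (intro powr_mono2) (auto intro: sum_nonneg)
  also have "\<dots> = (sqrt C powr p) powr (1 / p) * X powr (1 / p)" by (rule powr_mult)
  also have "(sqrt C powr p) powr (1 / p) = sqrt C"
    using p C by (simp add: powr_powr powr_one)
  also have "X powr (1 / p) = sqrt (X powr (1 / (p / 2)))"
  proof -
    have "X powr (1 / (p / 2)) = X powr (2 / p)" by simp
    then have "sqrt (X powr (1 / (p / 2))) = (X powr (2 / p)) powr (1 / 2)"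
      using powr_half_sqrt[of "X powr (2 / p)"] by simp
    also have "\<dots> = X powr (1 / p)" by (simp add: powr_powr)
    finally show ?thesis by simp
  qed
  finally show ?thesis unfolding X_def .
qed

theorem theorem4p2:
  fixes n :: nat and T S :: "complex mat" and e f g h :: "real \<Rightarrow> real"
  assumes T: "T \<in> carrier_mat n n" and S: "S \<in> carrier_mat n n"
    and cont: "continuous_on {0..} e" "continuous_on {0..} f"
              "continuous_on {0..} g" "continuous_on {0..} h"
    and nonneg: "\<And>t. t \<ge> 0 \<Longrightarrow> e t \<ge> 0 \<and> f t \<ge> 0 \<and> g t \<ge> 0 \<and> h t \<ge> 0"
    and fg: "\<And>t. t \<ge> 0 \<Longrightarrow> f t * g t = t"
    and eh: "\<And>t. t \<ge> 0 \<Longrightarrow> e t * h t = t"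
  shows "(\<forall>j\<in>{1..n}. sing_val (T + S) j \<le>
            sqrt (op_norm (mat_fun (\<lambda>t. (g t)\<^sup>2) (mat_abs (mat_adjoint T))
                         + mat_fun (\<lambda>t. (h t)\<^sup>2) (mat_abs (mat_adjoint S))))
          * sqrt (sing_val (mat_fun (\<lambda>t. (f t)\<^sup>2) (mat_abs T)
                         + mat_fun (\<lambda>t. (e t)\<^sup>2) (mat_abs S)) j))
       \<and> (\<forall>p::real. p > 0 \<longrightarrow> schatten_norm p (T + S) \<le>
            sqrt (op_norm (mat_fun (\<lambda>t. (g t)\<^sup>2) (mat_abs (mat_adjoint T))
                         + mat_fun (\<lambda>t. (h t)\<^sup>2) (mat_abs (mat_adjoint S))))
          * sqrt (schatten_norm (p / 2) (mat_fun (\<lambda>t. (f t)\<^sup>2) (mat_abs T)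
                         + mat_fun (\<lambda>t. (e t)\<^sup>2) (mat_abs S))))"
proof -
  let ?P = "mat_fun (\<lambda>t. (f t)\<^sup>2) (mat_abs T) + mat_fun (\<lambda>t. (e t)\<^sup>2) (mat_abs S)"
  let ?Q = "mat_fun (\<lambda>t. (g t)\<^sup>2) (mat_abs (mat_adjoint T)) + mat_fun (\<lambda>t. (h t)\<^sup>2) (mat_abs (mat_adjoint S))"
  have cr: "j \<in> {1..n} \<Longrightarrow> 0 \<le> op_norm ?Q \<and> 0 \<le> sing_val ?P j \<and> 0 \<le> sing_val (T + S) j \<and>
    sing_val (T + S) j \<le> sqrt (op_norm ?Q) * sqrt (sing_val ?P j)" for j
    using core[OF T S fg eh, of j] by auto
  have part1: "\<forall>j\<in>{1..n}. sing_val (T + S) j \<le> sqrt (op_norm ?Q) * sqrt (sing_val ?P j)"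
    using cr by blast
  have dTS: "dim_row (T + S) = n" using S by simp
  have dP: "dim_row ?P = n" using mat_fun_abs_dim[OF S] by simp
  have part2: "schatten_norm p (T + S) \<le> sqrt (op_norm ?Q) * sqrt (schatten_norm (p / 2) ?P)" if p: "p > 0" for p
  proof (cases "n = 0")
    case True
    then show ?thesis unfolding schatten_norm_def dTS dP using p by simp
  next
    case False
    then have C0: "0 \<le> op_norm ?Q" using cr[of 1] by simp
    show ?thesis unfolding schatten_norm_def dTS dP
      by (rule schatten_step[OF p C0]) (use cr in blast)
  qed
  show ?thesis using part1 part2 by blast
qed


end
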